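(* Let $V$ be a finite set, let $E$ be a set (possibly empty) of subsets of $V$ each of cardinality at least 2, and let $\lambda$ and $\{\lambda_A\}_{A\in E}$ be complex numbers. (a) If the hypergraph $G=(V,E)$ is a hyperforest and $\{C_\gamma\}$ is the partition of $V$ into the vertex sets of the connected components of $G$, then $\prod_{A\in E}f_A^{(\lambda)}=\prod_\gamma f_{C_\gamma}^{(\lambda)}$; more generally $\prod_{A\in E}f_A^{(\lambda_A)}=\prod_\gamma f_{C_\gamma}^{(\lambda_\gamma)}$, where $\lambda_\gamma=\sum_{A}(|A|-1)\lambda_A\big/\sum_A(|A|-1)$ with both sums over the hyperedges $A\in E$ contained in $C_\gamma$. (b) If $G$ is not a hyperforest, then $\prod_{A\in E}f_A^{(\lambda)}=0$ and more generally $\prod_{A\in E}f_A^{(\lambda_A)}=0$.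
   Context: A hypergraph is a pair $G=(V,E)$ with $V$ finite and $E$ a set of subsets of $V$ each of cardinality at least 2. Walks $(v_0,e_1,\ldots,e_k,v_k)$ require $v_{i-1},v_i\in e_i\in E$; connected components are the classes of vertices joined by walks (isolated vertices form singleton components). A cycle is a walk with $v_0,\ldots,v_{k-1}$ distinct, $v_k=v_0$, $e_1,\ldots,e_k$ distinct, $k\ge2$; a hyperforest has no cycles. For each $i\in V$ let $\psi_i,\bar\psi_i$ be anticommuting generators of a Grassmann algebra over $\mathbb{C}$; $\tau_A=\prod_{i\in A}\bar\psi_i\psi_i$ ($\tau_\emptyset=1$); $f_A^{(\lambda)}=\lambda(1-|A|)\tau_A+\sum_{i\in A}\tau_{A\setminus\{i\}}-\sum_{i,j\in A,\ i\neq j}\bar\psi_i\psi_j\,\tau_{A\setminus\{i,j\}}$. Note $f_{\{i\}}^{(\lambda)}=1$ for any $\lambda$. *)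

theory Defs
  imports Complex_Main "HOL-Library.Product_Lexorder"
begin

definition hypergraph :: "'a set \<Rightarrow> 'a set set \<Rightarrow> bool" where
  "hypergraph V E \<longleftrightarrow> finite V \<and> (\<forall>A\<in>E. A \<subseteq> V \<and> card A \<ge> 2)"

definition is_walk :: "'a set set \<Rightarrow> 'a list \<Rightarrow> 'a set list \<Rightarrow> bool" where
  "is_walk E vs es \<longleftrightarrow> length vs = Suc (length es) \<and>
     (\<forall>i < length es. es ! i \<in> E \<and> vs ! i \<in> es ! i \<and> vs ! Suc i \<in> es ! i)"

definition walk_connected :: "'a set set \<Rightarrow> 'a \<Rightarrow> 'a \<Rightarrow> bool" where
  "walk_connected E u v \<longleftrightarrow> (\<exists>vs es. is_walk E vs es \<and> hd vs = u \<and> last vs = v)"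

text \<open>Vertex sets of the connected components (isolated vertices give singletons).\<close>
definition components :: "'a set \<Rightarrow> 'a set set \<Rightarrow> 'a set set" where
  "components V E = {{v \<in> V. walk_connected E u v} | u. u \<in> V}"

definition is_cycle :: "'a set set \<Rightarrow> 'a list \<Rightarrow> 'a set list \<Rightarrow> bool" where
  "is_cycle E vs es \<longleftrightarrow> is_walk E vs es \<and> length es \<ge> 2 \<and>
     distinct (butlast vs) \<and> last vs = hd vs \<and> distinct es"

definition hyperforest :: "'a set set \<Rightarrow> bool" where
  "hyperforest E \<longleftrightarrow> \<not> (\<exists>vs es. is_cycle E vs es)"

text \<open>Generators are indexed by pairs (i, b): (i, False) is psi_i and (i, True) is psibar_i.
  An element of the Grassmann algebra is a coefficient function on finite sets of generators;
  the set S = {g_1 < ... < g_m} stands for the ordered monomial g_1 g_2 ... g_m.\<close>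
type_synonym 'a grass = "('a \<times> bool) set \<Rightarrow> complex"

definition gsign :: "('a::linorder \<times> bool) set \<Rightarrow> ('a \<times> bool) set \<Rightarrow> complex" where
  "gsign T U = (-1) ^ card {(t, u). t \<in> T \<and> u \<in> U \<and> u < t}"

definition gmult :: "'a::linorder grass \<Rightarrow> 'a grass \<Rightarrow> 'a grass" where
  "gmult x y = (\<lambda>S. if finite S then (\<Sum>T\<in>Pow S. gsign T (S - T) * x T * y (S - T)) else 0)"

definition gconst :: "complex \<Rightarrow> 'a grass" where
  "gconst c = (\<lambda>S. if S = {} then c else 0)"

definition gadd :: "'a grass \<Rightarrow> 'a grass \<Rightarrow> 'a grass" where
  "gadd x y = (\<lambda>S. x S + y S)"

definition gsub :: "'a grass \<Rightarrow> 'a grass \<Rightarrow> 'a grass" where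
  "gsub x y = (\<lambda>S. x S - y S)"

definition gscale :: "complex \<Rightarrow> 'a grass \<Rightarrow> 'a grass" where
  "gscale c x = (\<lambda>S. c * x S)"

definition gsum :: "('b \<Rightarrow> 'a grass) \<Rightarrow> 'b set \<Rightarrow> 'a grass" where
  "gsum f I = (\<lambda>S. \<Sum>i\<in>I. f i S)"

definition gprod :: "'a::linorder grass list \<Rightarrow> 'a grass" where
  "gprod xs = foldr gmult xs (gconst 1)"

definition gen :: "'a \<times> bool \<Rightarrow> 'a grass" where
  "gen g = (\<lambda>S. if S = {g} then 1 else 0)"

definition psi :: "'a \<Rightarrow> 'a grass" where "psi i = gen (i, False)"
definition psibar :: "'a \<Rightarrow> 'a grass" where "psibar i = gen (i, True)"

text \<open>tau_A = prod_{i in A} psibar_i psi_i (the factors are even, so the order is irrelevant;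
  we use increasing order).\<close>
definition tau :: "'a::linorder set \<Rightarrow> 'a grass" where
  "tau A = gprod (map (\<lambda>i. gmult (psibar i) (psi i)) (sorted_list_of_set A))"

definition fA :: "complex \<Rightarrow> 'a::linorder set \<Rightarrow> 'a grass" where
  "fA lam A = gsub (gadd (gscale (lam * (1 - of_nat (card A))) (tau A))
                         (gsum (\<lambda>i. tau (A - {i})) A))
                   (gsum (\<lambda>(i, j). gmult (gmult (psibar i) (psi j)) (tau (A - {i, j})))
                         {(i, j). i \<in> A \<and> j \<in> A \<and> i \<noteq> j})"

definition comp_lambda :: "'a set set \<Rightarrow> ('a set \<Rightarrow> complex) \<Rightarrow> 'a set \<Rightarrow> complex" where
  "comp_lambda E lamA C =
     (\<Sum>A\<in>{A\<in>E. A \<subseteq> C}. of_nat (card A - 1) * lamA A) /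
     (\<Sum>A\<in>{A\<in>E. A \<subseteq> C}. of_nat (card A - 1))"

end

theory Submission
  imports Defs
begin


lemma gsign_fin: "finite T \<Longrightarrow> finite U \<Longrightarrow> finite {(t, u). t \<in> T \<and> u \<in> U \<and> u < t}"
  by (rule finite_subset[of _ "T \<times> U"]) auto

lemma gsign_union_right:
  assumes "finite T" "finite U" "finite W" "U \<inter> W = {}"
  shows "gsign T (U \<union> W) = gsign T U * gsign T W"
proof -
  have eq: "{(t, u). t \<in> T \<and> u \<in> U \<union> W \<and> u < t} =
        {(t, u). t \<in> T \<and> u \<in> U \<and> u < t} \<union> {(t, u). t \<in> T \<and> u \<in> W \<and> u < t}" by auto
  have "card {(t, u). t \<in> T \<and> u \<in> U \<union> W \<and> u < t} =
        card {(t, u). t \<in> T \<and> u \<in> U \<and> u < t} + card {(t, u). t \<in> T \<and> u \<in> W \<and> u < t}"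
    unfolding eq using assms by (intro card_Un_disjoint gsign_fin) auto
  then show ?thesis unfolding gsign_def by (simp add: power_add)
qed

lemma gsign_union_left:
  assumes "finite T" "finite U" "finite W" "T \<inter> U = {}"
  shows "gsign (T \<union> U) W = gsign T W * gsign U W"
proof -
  have eq: "{(t, u). t \<in> T \<union> U \<and> u \<in> W \<and> u < t} =
        {(t, u). t \<in> T \<and> u \<in> W \<and> u < t} \<union> {(t, u). t \<in> U \<and> u \<in> W \<and> u < t}" by auto
  have "card {(t, u). t \<in> T \<union> U \<and> u \<in> W \<and> u < t} =
        card {(t, u). t \<in> T \<and> u \<in> W \<and> u < t} + card {(t, u). t \<in> U \<and> u \<in> W \<and> u < t}"
    unfolding eq using assms by (intro card_Un_disjoint gsign_fin) auto
  then show ?thesis unfolding gsign_def by (simp add: power_add)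
qed

lemma gsign_empty_left[simp]: "gsign {} U = 1" by (simp add: gsign_def)
lemma gsign_empty_right[simp]: "gsign T {} = 1" by (simp add: gsign_def)

lemma gmult_assoc: "gmult (gmult x y) z = gmult x (gmult y z)"
proof
  fix S :: "('a::linorder \<times> bool) set"
  show "gmult (gmult x y) z S = gmult x (gmult y z) S"
  proof (cases "finite S")
    case False then show ?thesis by (simp add: gmult_def)
  next
    case fin: True
    have L0: "gmult (gmult x y) z S = (\<Sum>R\<in>Pow S. \<Sum>T\<in>Pow R.
        gsign R (S - R) * gsign T (R - T) * x T * y (R - T) * z (S - R))"
      using fin unfolding gmult_def
      by (auto simp: sum_distrib_left sum_distrib_right mult.assoc intro!: sum.cong
          dest: finite_subset)
    have L: "gmult (gmult x y) z S = (\<Sum>(R,T)\<in>Sigma (Pow S) Pow.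
        gsign R (S - R) * gsign T (R - T) * x T * y (R - T) * z (S - R))"
      unfolding L0 using fin by (subst sum.Sigma) (auto intro: finite_subset)
    have R0: "gmult x (gmult y z) S = (\<Sum>T\<in>Pow S. \<Sum>U\<in>Pow (S - T).
        gsign T (S - T) * gsign U (S - T - U) * x T * y U * z (S - T - U))"
      using fin unfolding gmult_def
      by (auto simp: sum_distrib_left sum_distrib_right mult.assoc mult.left_commute intro!: sum.cong
          dest: finite_subset)
    have R: "gmult x (gmult y z) S = (\<Sum>(T,U)\<in>Sigma (Pow S) (\<lambda>T. Pow (S - T)).
        gsign T (S - T) * gsign U (S - T - U) * x T * y U * z (S - T - U))"
      unfolding R0 using fin by (subst sum.Sigma) (auto intro: finite_subset)
    have "(\<Sum>(R,T)\<in>Sigma (Pow S) Pow.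
        gsign R (S - R) * gsign T (R - T) * x T * y (R - T) * z (S - R)) =
      (\<Sum>(T,U)\<in>Sigma (Pow S) (\<lambda>T. Pow (S - T)).
        gsign T (S - T) * gsign U (S - T - U) * x T * y U * z (S - T - U))"
    proof (rule sum.reindex_bij_witness[where i = "\<lambda>(T,U). (T \<union> U, T)" and j = "\<lambda>(R,T). (T, R - T)"])
      fix a assume "a \<in> Sigma (Pow S) Pow"
      then obtain R T where a: "a = (R,T)" "R \<subseteq> S" "T \<subseteq> R" by auto
      have fT: "finite T" "finite (R - T)" "finite (S - R)" using a fin by (auto intro: finite_subset)
      have e1: "S - T = (R - T) \<union> (S - R)" and e2: "S - T - (R - T) = S - R" and e3: "R = T \<union> (R - T)"
        using a by auto
      have "gsign (T \<union> (R - T)) (S - R) * gsign T (R - T) =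
            gsign T ((R - T) \<union> (S - R)) * gsign (R - T) (S - R)"
      proof -
        have A: "gsign (T \<union> (R - T)) (S - R) = gsign T (S-R) * gsign (R-T) (S-R)"
          by (rule gsign_union_left) (use fT in auto)
        have B: "gsign T ((R-T) \<union> (S-R)) = gsign T (R-T) * gsign T (S-R)"
          by (rule gsign_union_right) (use fT a in auto)
        show ?thesis unfolding A B by (simp add: mult_ac)
      qed
      moreover have "T \<union> (R - T) = R" using a by auto
      ultimately have "gsign R (S - R) * gsign T (R - T) =
            gsign T (S - T) * gsign (R - T) (S - T - (R - T))" using e1 e2 by simp
      then show "(case case a of (R, T) \<Rightarrow> (T, R - T) of
            (T, U) \<Rightarrow> gsign T (S - T) * gsign U (S - T - U) * x T * y U * z (S - T - U)) =
           (case a of (R, T) \<Rightarrow> gsign R (S - R) * gsign T (R - T) * x T * y (R - T) * z (S - R))"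
        using a e2 by (simp add: algebra_simps)
    qed auto
    then show ?thesis using L R by simp
  qed
qed


definition fz :: "'a grass \<Rightarrow> bool" where "fz x \<longleftrightarrow> (\<forall>S. infinite S \<longrightarrow> x S = 0)"
definition evp :: "'a grass \<Rightarrow> bool" where "evp x \<longleftrightarrow> fz x \<and> (\<forall>S. odd (card S) \<longrightarrow> x S = 0)"

lemma gmult_fz: "fz (gmult x y)" by (simp add: fz_def gmult_def)

lemma gmult_one_left: "fz x \<Longrightarrow> gmult (gconst 1) x = x"
proof
  fix S assume "fz x"
  show "gmult (gconst 1) x S = x S"
  proof (cases "finite S")
    case True
    have "gmult (gconst 1) x S = (\<Sum>T\<in>Pow S. gsign T (S - T) * (if T = {} then 1 else 0) * x (S - T))"
      using True unfolding gmult_def gconst_def by simp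
    also have "\<dots> = (\<Sum>T\<in>Pow S. if T = {} then x S else 0)" by (rule sum.cong) auto
    also have "\<dots> = x S" using True by simp
    finally show ?thesis .
  qed (use \<open>fz x\<close> in \<open>auto simp: fz_def gmult_def\<close>)
qed

lemma gmult_one_right: "fz x \<Longrightarrow> gmult x (gconst 1) = x"
proof
  fix S assume "fz x"
  show "gmult x (gconst 1) S = x S"
  proof (cases "finite S")
    case True
    have "gmult x (gconst 1) S = (\<Sum>T\<in>Pow S. gsign T (S - T) * x T * (if S - T = {} then 1 else 0))"
      using True unfolding gmult_def gconst_def by simp
    also have "\<dots> = (\<Sum>T\<in>Pow S. if T = S then x S else 0)" by (rule sum.cong) auto
    also have "\<dots> = x S" using True by simp
    finally show ?thesis .
  qed (use \<open>fz x\<close> in \<open>auto simp: fz_def gmult_def\<close>)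
qed

lemma gmult_zero_left: "gmult (\<lambda>_. 0) x = (\<lambda>_. 0)" by (simp add: gmult_def fun_eq_iff)
lemma gmult_zero_right: "gmult x (\<lambda>_. 0) = (\<lambda>_. 0)" by (simp add: gmult_def fun_eq_iff)

lemma gmult_add_left: "gmult (gadd x y) z = gadd (gmult x z) (gmult y z)"
  by (simp add: gmult_def gadd_def fun_eq_iff algebra_simps sum.distrib)
lemma gmult_add_right: "gmult z (gadd x y) = gadd (gmult z x) (gmult z y)"
  by (simp add: gmult_def gadd_def fun_eq_iff algebra_simps sum.distrib)
lemma gmult_sub_left: "gmult (gsub x y) z = gsub (gmult x z) (gmult y z)"
  by (simp add: gmult_def gsub_def fun_eq_iff algebra_simps sum_subtractf)
lemma gmult_sub_right: "gmult z (gsub x y) = gsub (gmult z x) (gmult z y)"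
  by (simp add: gmult_def gsub_def fun_eq_iff algebra_simps sum_subtractf)
lemma gmult_scale_left: "gmult (gscale c x) z = gscale c (gmult x z)"
  by (simp add: gmult_def gscale_def fun_eq_iff algebra_simps sum_distrib_left)
lemma gmult_scale_right: "gmult z (gscale c x) = gscale c (gmult z x)"
  by (simp add: gmult_def gscale_def fun_eq_iff algebra_simps sum_distrib_left)

lemma gsign_swap_card:
  fixes T U :: "'a::linorder set"
  assumes "finite T" "finite U" "T \<inter> U = {}"
  shows "card {(t, u). t \<in> T \<and> u \<in> U \<and> u < t} + card {(u, t). u \<in> U \<and> t \<in> T \<and> t < u}
         = card T * card U"
proof -
  have im: "{(u, t). u \<in> U \<and> t \<in> T \<and> t < u} = (\<lambda>(t,u). (u,t)) ` {(t, u). t \<in> T \<and> u \<in> U \<and> t < u}"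
    by auto
  have c2: "card {(u, t). u \<in> U \<and> t \<in> T \<and> t < u} = card {(t, u). t \<in> T \<and> u \<in> U \<and> t < u}"
    unfolding im by (rule card_image) (auto simp: inj_on_def)
  have un: "T \<times> U = {(t, u). t \<in> T \<and> u \<in> U \<and> u < t} \<union> {(t, u). t \<in> T \<and> u \<in> U \<and> t < u}"
    using assms(3) by (auto simp: disjoint_iff) (metis not_less_iff_gr_or_eq)
  have "card (T \<times> U) = card {(t, u). t \<in> T \<and> u \<in> U \<and> u < t} + card {(t, u). t \<in> T \<and> u \<in> U \<and> t < u}"
    unfolding un using assms
    by (intro card_Un_disjoint) (auto intro: finite_subset[of _ "T \<times> U"])
  then show ?thesis using c2 by (simp add: card_cartesian_product)
qed

lemma gsign_swap:
  assumes "finite T" "finite U" "T \<inter> U = {}" "even (card T)"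
  shows "gsign U T = gsign T U"
proof -
  let ?a = "card {(t, u). t \<in> T \<and> u \<in> U \<and> u < t}"
  let ?b = "card {(u, t). u \<in> U \<and> t \<in> T \<and> t < u}"
  have "?a + ?b = card T * card U" using gsign_swap_card assms by blast
  then have "even (?a + ?b)" using assms(4) by simp
  then have "even ?a = even ?b" by auto
  then show ?thesis unfolding gsign_def
    by (cases "even ?a") (auto simp: neg_one_even_power neg_one_odd_power)
qed

lemma gmult_comm:
  assumes "\<forall>S. odd (card S) \<longrightarrow> x S = 0"
  shows "gmult x y = gmult y x"
proof
  fix S :: "('a \<times> bool) set"
  show "gmult x y S = gmult y x S"
  proof (cases "finite S")
    case fin: True
    have "gmult y x S = (\<Sum>T\<in>Pow S. gsign T (S - T) * y T * x (S - T))"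
      using fin by (simp add: gmult_def)
    also have "\<dots> = (\<Sum>T\<in>Pow S. gsign (S - T) (S - (S - T)) * y (S - T) * x (S - (S - T)))"
      by (rule sum.reindex_bij_witness[where i = "\<lambda>T. S - T" and j = "\<lambda>T. S - T"])
        (auto simp: Diff_Diff_Int Int_absorb1 Int_absorb2)
    also have "\<dots> = (\<Sum>T\<in>Pow S. gsign T (S - T) * x T * y (S - T))"
    proof (rule sum.cong[OF refl])
      fix T assume T: "T \<in> Pow S"
      then have e: "S - (S - T) = T" by auto
      show "gsign (S - T) (S - (S - T)) * y (S - T) * x (S - (S - T)) = gsign T (S - T) * x T * y (S - T)"
      proof (cases "even (card T)")
        case True
        then have "gsign (S - T) T = gsign T (S - T)"
          using T fin by (intro gsign_swap) (auto intro: finite_subset)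
        then show ?thesis unfolding e by simp
      next
        case False then show ?thesis using assms e by simp
      qed
    qed
    also have "\<dots> = gmult x y S" using fin by (simp add: gmult_def)
    finally show ?thesis by simp
  qed (simp add: gmult_def)
qed

lemma gmult_even:
  assumes "\<forall>S. odd (card S) \<longrightarrow> x S = 0" "\<forall>S. odd (card S) \<longrightarrow> y S = 0" "odd (card S)"
  shows "gmult x y S = 0"
proof (cases "finite S")
  case fin: True
  have "gsign T (S - T) * x T * y (S - T) = 0" if "T \<in> Pow S" for T
  proof -
    have "card S = card T + card (S - T)" using that fin
      by (metis PowD card_Diff_subset card_mono diff_add_inverse finite_subset le_add_diff_inverse)
    then have "odd (card T) \<or> odd (card (S - T))" using assms(3) by auto
    then show ?thesis using assms(1,2) by auto
  qed
  then have "(\<Sum>T\<in>Pow S. gsign T (S - T) * x T * y (S - T)) = 0" by (intro sum.neutral) blast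
  then show ?thesis using fin by (simp add: gmult_def)
qed (simp add: gmult_def)

lemma gen_mult_left:
  "gmult (gen a) y S = (if finite S \<and> a \<in> S then gsign {a} (S - {a}) * y (S - {a}) else 0)"
proof (cases "finite S")
  case True
  have "gmult (gen a) y S = (\<Sum>T\<in>Pow S. gsign T (S - T) * (if T = {a} then 1 else 0) * y (S - T))"
    using True unfolding gmult_def gen_def by simp
  also have "\<dots> = (\<Sum>T\<in>Pow S. if {a} = T then gsign {a} (S - {a}) * y (S - {a}) else 0)"
    by (rule sum.cong) auto
  also have "\<dots> = (if a \<in> S then gsign {a} (S - {a}) * y (S - {a}) else 0)"
    using True by simp
  finally show ?thesis using True by simp
qed (simp add: gmult_def)

lemma gsign_single: "gsign {a} {b} = (if b < a then -1 else 1)"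
proof -
  have "{(t, u). t \<in> {a} \<and> u \<in> {b} \<and> u < t} = (if b < a then {(a,b)} else {})" by auto
  then show ?thesis unfolding gsign_def by auto
qed

lemma gen_gen: "gmult (gen a) (gen b) =
   (\<lambda>S. if a \<noteq> b \<and> S = {a, b} then (if b < a then -1 else 1) else 0)"
proof
  fix S
  have "S - {a} = {b} \<and> a \<in> S \<longleftrightarrow> a \<noteq> b \<and> S = {a,b}" by auto
  then show "gmult (gen a) (gen b) S = (if a \<noteq> b \<and> S = {a, b} then (if b < a then -1 else 1) else 0)"
    unfolding gen_mult_left by (auto simp: gen_def gsign_single)
qed

lemma gen_anti: "gmult (gen a) (gen b) = (\<lambda>S. - gmult (gen b) (gen a) S)"
  unfolding gen_gen by (auto simp: fun_eq_iff insert_commute neq_iff)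

lemma gen_sq: "gmult (gen a) (gen a) = (\<lambda>_. 0)"
  unfolding gen_gen by auto

lemma fz_gen: "fz (gen a)" by (auto simp: fz_def gen_def)


typedef ('a::linorder) gr = "{x :: 'a grass. fz x}"
  by (rule exI[of _ "\<lambda>_. 0"]) (simp add: fz_def)

setup_lifting type_definition_gr

instantiation gr :: (linorder) ring_1
begin
lift_definition zero_gr :: "'a gr" is "\<lambda>_. 0" by (simp add: fz_def)
lift_definition one_gr :: "'a gr" is "gconst 1" by (simp add: fz_def gconst_def)
lift_definition plus_gr :: "'a gr \<Rightarrow> 'a gr \<Rightarrow> 'a gr" is gadd by (simp add: fz_def gadd_def)
lift_definition minus_gr :: "'a gr \<Rightarrow> 'a gr \<Rightarrow> 'a gr" is gsub by (simp add: fz_def gsub_def)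
lift_definition uminus_gr :: "'a gr \<Rightarrow> 'a gr" is "\<lambda>x S. - x S" by (simp add: fz_def)
lift_definition times_gr :: "'a gr \<Rightarrow> 'a gr \<Rightarrow> 'a gr" is gmult by (rule gmult_fz)
instance
proof
  fix a b c :: "'a gr"
  show "a * b * c = a * (b * c)" by transfer (rule gmult_assoc)
  show "a + b + c = a + (b + c)" by transfer (simp add: gadd_def fun_eq_iff algebra_simps)
  show "a + b = b + a" by transfer (simp add: gadd_def fun_eq_iff algebra_simps)
  show "0 + a = a" by transfer (simp add: gadd_def)
  show "- a + a = 0" by transfer (simp add: gadd_def)
  show "a - b = a + - b" by transfer (simp add: gadd_def gsub_def)
  show "(a + b) * c = a * c + b * c" by transfer (rule gmult_add_left)
  show "a * (b + c) = a * b + a * c" by transfer (rule gmult_add_right)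
  show "1 * a = a" by transfer (rule gmult_one_left)
  show "a * 1 = a" by transfer (rule gmult_one_right)
  show "(0::'a gr) \<noteq> 1" by transfer (simp add: gconst_def fun_eq_iff)
qed
end



typedef ('a::linorder) ev = "{x :: 'a grass. evp x}"
  by (rule exI[of _ "\<lambda>_. 0"]) (simp add: evp_def fz_def)

setup_lifting type_definition_ev

lemma evp_mult: "evp x \<Longrightarrow> evp y \<Longrightarrow> evp (gmult x y)"
  unfolding evp_def using gmult_fz gmult_even by blast

instantiation ev :: (linorder) comm_ring_1
begin
lift_definition zero_ev :: "'a ev" is "\<lambda>_. 0" by (simp add: evp_def fz_def)
lift_definition one_ev :: "'a ev" is "gconst 1" by (simp add: evp_def fz_def gconst_def)
lift_definition plus_ev :: "'a ev \<Rightarrow> 'a ev \<Rightarrow> 'a ev" is gadd by (simp add: evp_def fz_def gadd_def)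
lift_definition minus_ev :: "'a ev \<Rightarrow> 'a ev \<Rightarrow> 'a ev" is gsub by (simp add: evp_def fz_def gsub_def)
lift_definition uminus_ev :: "'a ev \<Rightarrow> 'a ev" is "\<lambda>x S. - x S" by (simp add: evp_def fz_def)
lift_definition times_ev :: "'a ev \<Rightarrow> 'a ev \<Rightarrow> 'a ev" is gmult by (rule evp_mult)
instance
proof
  fix a b c :: "'a ev"
  show "a * b * c = a * (b * c)" by transfer (rule gmult_assoc)
  show "a * b = b * a" by transfer (rule gmult_comm, simp add: evp_def)
  show "a + b + c = a + (b + c)" by transfer (simp add: gadd_def fun_eq_iff algebra_simps)
  show "a + b = b + a" by transfer (simp add: gadd_def fun_eq_iff algebra_simps)
  show "0 + a = a" by transfer (simp add: gadd_def)
  show "- a + a = 0" by transfer (simp add: gadd_def)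
  show "a - b = a + - b" by transfer (simp add: gadd_def gsub_def)
  show "(a + b) * c = a * c + b * c" by transfer (rule gmult_add_left)
  show "1 * a = a" by transfer (simp add: gmult_one_left evp_def)
  show "(0::'a ev) \<noteq> 1" by transfer (simp add: gconst_def fun_eq_iff)
qed
end

lift_definition toG :: "'a::linorder ev \<Rightarrow> 'a gr" is "\<lambda>x. x" by (simp add: evp_def)

lemma toG_mult: "toG (x * y) = toG x * toG y" by transfer simp
lemma toG_inj: "toG x = toG y \<Longrightarrow> x = y" by transfer simp
lemma toG_0: "toG 0 = 0" by transfer simp

lift_definition g :: "'a::linorder \<times> bool \<Rightarrow> 'a gr" is gen by (rule fz_gen)

lemma g_anti: "g a * g b = - (g b * g a)" by transfer (rule gen_anti)
lemma g_sq: "g a * g a = 0" by transfer (rule gen_sq)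

lift_definition e :: "'a::linorder \<Rightarrow> 'a \<Rightarrow> 'a ev" is "\<lambda>i j. gmult (psibar i) (psi j)"
proof -
  fix i j :: 'a
  have ev1: "evp (gmult (gen (i, True)) (gen (j, False)))"
    unfolding evp_def fz_def gen_gen by (auto simp: card_insert_if)
  then show "evp (gmult (psibar i) (psi j))" by (simp add: psibar_def psi_def)
qed

lemma toG_e: "toG (e i j) = g (i, True) * g (j, False)"
  by transfer (simp add: psibar_def psi_def)

lemma g3_anti: "g b * (g c * x) = - (g c * (g b * x))"
proof -
  have "g b * (g c * x) = (g b * g c) * x" by (simp add: mult.assoc)
  also have "\<dots> = - (g c * g b) * x" by (simp only: g_anti[of b c])
  also have "\<dots> = - (g c * (g b * x))" by (simp add: mult.assoc)
  finally show ?thesis .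
qed

lemma g4_swap: "g a * g b * (g c * g d) = - (g a * g d * (g c * g b))"
proof -
  have 1: "g b * (g c * g d) = - (g c * (g b * g d))" by (rule g3_anti)
  have 2: "g b * g d = - (g d * g b)" by (rule g_anti)
  have 3: "g d * (g c * g b) = - (g c * (g d * g b))" by (rule g3_anti)
  have "g a * g b * (g c * g d) = g a * (g b * (g c * g d))" by (simp only: mult.assoc)
  also have "\<dots> = g a * (g c * (g d * g b))" by (simp only: 1 2 mult_minus_right minus_minus)
  also have "\<dots> = - (g a * (g d * (g c * g b)))" by (simp only: 3 mult_minus_right minus_minus)
  also have "\<dots> = - (g a * g d * (g c * g b))" by (simp only: mult.assoc)
  finally show ?thesis .
qed

lemma g4_zero1: "g a * g b * (g a * g d) = 0"
proof -
  have "g b * (g a * g d) = - (g a * (g b * g d))" by (rule g3_anti)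
  then have "g a * g b * (g a * g d) = - (g a * g a * (g b * g d))" by (simp add: mult.assoc)
  then show ?thesis by (simp add: g_sq)
qed

lemma e_rel1: "e i j * e i l = 0"
  by (rule toG_inj) (simp only: toG_mult toG_e toG_0 g4_zero1)

lemma e_rel3: "e i j * e k l = - (e i l * e k j)"
proof (rule toG_inj)
  have neg: "toG (- x) = - toG x" for x :: "'a ev" by transfer simp
  show "toG (e i j * e k l) = toG (- (e i l * e k j))"
    unfolding neg toG_mult toG_e by (rule g4_swap)
qed

lemma g4_zero2: "g a * g b * (g c * g b) = 0"
proof -
  have "g b * (g c * g b) = - (g c * (g b * g b))" by (rule g3_anti)
  then show ?thesis by (simp add: mult.assoc g_sq)
qed

lemma e_rel2: "e i j * e k j = 0"
  by (rule toG_inj) (simp only: toG_mult toG_e toG_0 g4_zero2)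


definition T :: "'a::linorder set \<Rightarrow> 'a ev" where "T A = (\<Prod>k\<in>A. e k k)"
definition PP :: "'a set \<Rightarrow> ('a \<times> 'a) set" where "PP A = {(i,j). i \<in> A \<and> j \<in> A \<and> i \<noteq> j}"
definition F0 :: "'a::linorder set \<Rightarrow> 'a ev" where
  "F0 A = (\<Sum>i\<in>A. T (A - {i})) - (\<Sum>(i,j)\<in>PP A. e i j * T (A - {i,j}))"
definition q :: "'a::linorder \<Rightarrow> 'a \<Rightarrow> 'a ev" where "q k r = e k k - e k r - e r k + e r r"

lemma finite_PP: "finite A \<Longrightarrow> finite (PP A)"
  unfolding PP_def by (rule finite_subset[of _ "A \<times> A"]) auto

lemma T_remove: "finite X \<Longrightarrow> r \<in> X \<Longrightarrow> T X = e r r * T (X - {r})"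
  unfolding T_def by (rule prod.remove)

lemma T_insert: "finite X \<Longrightarrow> k \<notin> X \<Longrightarrow> T (insert k X) = e k k * T X"
  unfolding T_def by simp

lemma T_empty[simp]: "T {} = 1" by (simp add: T_def)

lemma Z1: assumes "finite X" "r \<in> X" shows "T X * e r j = 0"
proof -
  have "T X * e r j = T (X - {r}) * (e r r * e r j)" using assms by (simp add: T_remove mult_ac)
  then show ?thesis by (simp add: e_rel1)
qed

lemma Z2: assumes "finite X" "r \<in> X" shows "T X * e j r = 0"
proof -
  have "T X * e j r = T (X - {r}) * (e r r * e j r)" using assms by (simp add: T_remove mult_ac)
  then show ?thesis by (simp add: e_rel2)
qed

lemma F0_err:
  assumes fin: "finite A" and r: "r \<in> A"
  shows "F0 A * e r r = T A"
proof -
  have s1: "(\<Sum>i\<in>A. T (A - {i})) * e r r = T A"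
  proof -
    have "(\<Sum>i\<in>A. T (A - {i})) * e r r = (\<Sum>i\<in>A. T (A - {i}) * e r r)"
      by (simp add: sum_distrib_right)
    also have "\<dots> = T (A - {r}) * e r r + (\<Sum>i\<in>A - {r}. T (A - {i}) * e r r)"
      using fin r by (simp add: sum.remove)
    also have "(\<Sum>i\<in>A - {r}. T (A - {i}) * e r r) = 0"
      using fin r by (intro sum.neutral) (auto intro!: Z1)
    also have "T (A - {r}) * e r r = T A" using fin r by (simp add: T_remove mult_ac)
    finally show ?thesis by simp
  qed
  have s2: "(\<Sum>(i,j)\<in>PP A. e i j * T (A - {i,j})) * e r r = 0"
    unfolding sum_distrib_right
  proof (intro sum.neutral ballI)
    fix x assume "x \<in> PP A"
    then obtain i j where x: "x = (i,j)" "i \<in> A" "j \<in> A" "i \<noteq> j" by (auto simp: PP_def)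
    have "e i j * T (A - {i,j}) * e r r = 0"
    proof (cases "r = i")
      case True
      then have "e i j * T (A - {i,j}) * e r r = T (A - {i,j}) * (e r j * e r r)" by (simp add: mult_ac)
      then show ?thesis by (simp add: e_rel1)
    next
      case ni: False
      show ?thesis
      proof (cases "r = j")
        case True
        then have "e i j * T (A - {i,j}) * e r r = T (A - {i,j}) * (e i r * e r r)" by (simp add: mult_ac)
        then show ?thesis by (simp add: e_rel2)
      next
        case False
        then have "T (A - {i,j}) * e r r = 0" using ni fin r by (intro Z1) auto
        then show ?thesis by (simp add: mult.assoc)
      qed
    qed
    then show "(case x of (i, j) \<Rightarrow> e i j * T (A - {i, j})) * e r r = 0" using x by simp
  qed
  show ?thesis unfolding F0_def left_diff_distrib s1 s2 by simp
qed

lemma F0_ekr: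
  assumes fin: "finite A" and r: "r \<in> A"
  shows "F0 A * e k r = (\<Sum>j\<in>A. e k j * T (A - {j}))"
proof -
  have s1: "(\<Sum>i\<in>A. T (A - {i})) * e k r = T (A - {r}) * e k r"
  proof -
    have "(\<Sum>i\<in>A. T (A - {i})) * e k r = (\<Sum>i\<in>A. T (A - {i}) * e k r)"
      by (simp add: sum_distrib_right)
    also have "\<dots> = T (A - {r}) * e k r + (\<Sum>i\<in>A - {r}. T (A - {i}) * e k r)"
      using fin r by (simp add: sum.remove)
    also have "(\<Sum>i\<in>A - {r}. T (A - {i}) * e k r) = 0"
      using fin r by (intro sum.neutral) (auto intro!: Z2)
    finally show ?thesis by simp
  qed
  have s2: "(\<Sum>(i,j)\<in>PP A. e i j * T (A - {i,j})) * e k r = (\<Sum>j\<in>A - {r}. - (e k j * T (A - {j})))"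
  proof -
    have "(\<Sum>(i,j)\<in>PP A. e i j * T (A - {i,j})) * e k r = (\<Sum>x\<in>PP A. (case x of (i,j) \<Rightarrow> e i j * T (A - {i,j})) * e k r)"
      by (simp add: sum_distrib_right)
    also have "\<dots> = (\<Sum>x\<in>(\<lambda>j. (r,j)) ` (A - {r}). (case x of (i,j) \<Rightarrow> e i j * T (A - {i,j})) * e k r)"
    proof (rule sum.mono_neutral_right)
      show "finite (PP A)" using fin by (rule finite_PP)
      show "(\<lambda>j. (r,j)) ` (A - {r}) \<subseteq> PP A" using r by (auto simp: PP_def)
      show "\<forall>x\<in>PP A - (\<lambda>j. (r,j)) ` (A - {r}). (case x of (i,j) \<Rightarrow> e i j * T (A - {i,j})) * e k r = 0"
      proof
        fix x assume "x \<in> PP A - (\<lambda>j. (r,j)) ` (A - {r})"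
        then obtain i j where x: "x = (i,j)" "i \<in> A" "j \<in> A" "i \<noteq> j" "i \<noteq> r" by (auto simp: PP_def)
        have "e i j * T (A - {i,j}) * e k r = 0"
        proof (cases "j = r")
          case True
          then have "e i j * T (A - {i,j}) * e k r = T (A - {i,j}) * (e i r * e k r)" by (simp add: mult_ac)
          then show ?thesis by (simp add: e_rel2)
        next
          case False
          then have "T (A - {i,j}) * e k r = 0" using x fin r by (intro Z2) auto
          then show ?thesis by (simp add: mult.assoc)
        qed
        then show "(case x of (i,j) \<Rightarrow> e i j * T (A - {i,j})) * e k r = 0" using x by simp
      qed
    qed
    also have "\<dots> = (\<Sum>j\<in>A - {r}. e r j * T (A - {r,j}) * e k r)"
      by (subst sum.reindex) (auto simp: inj_on_def)
    also have "\<dots> = (\<Sum>j\<in>A - {r}. - (e k j * T (A - {j})))"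
    proof (rule sum.cong[OF refl])
      fix j assume j: "j \<in> A - {r}"
      have "e r j * T (A - {r,j}) * e k r = T (A - {r,j}) * (e r j * e k r)" by (simp add: mult_ac)
      also have "\<dots> = T (A - {r,j}) * (- (e r r * e k j))" by (simp only: e_rel3[of r j k r])
      also have "\<dots> = T (A - {j} - {r}) * (- (e r r * e k j))"
        by (metis Diff_insert2 insert_commute)
      also have "\<dots> = - (e k j * (e r r * T (A - {j} - {r})))"
        by (simp add: mult_ac)
      also have "e r r * T (A - {j} - {r}) = T (A - {j})"
        using j fin r by (subst T_remove[of "A - {j}" r]) auto
      finally show "e r j * T (A - {r,j}) * e k r = - (e k j * T (A - {j}))" .
    qed
    finally show ?thesis .
  qed
  have s3: "(\<Sum>j\<in>A. e k j * T (A - {j})) = e k r * T (A - {r}) + (\<Sum>j\<in>A - {r}. e k j * T (A - {j}))"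
    using fin r by (simp add: sum.remove)
  show ?thesis unfolding F0_def left_diff_distrib s1 s2 s3 by (simp add: sum_negf mult.commute)
qed

lemma F0_erk:
  assumes fin: "finite A" and r: "r \<in> A"
  shows "F0 A * e r k = (\<Sum>i\<in>A. e i k * T (A - {i}))"
proof -
  have s1: "(\<Sum>i\<in>A. T (A - {i})) * e r k = T (A - {r}) * e r k"
  proof -
    have "(\<Sum>i\<in>A. T (A - {i})) * e r k = (\<Sum>i\<in>A. T (A - {i}) * e r k)"
      by (simp add: sum_distrib_right)
    also have "\<dots> = T (A - {r}) * e r k + (\<Sum>i\<in>A - {r}. T (A - {i}) * e r k)"
      using fin r by (simp add: sum.remove)
    also have "(\<Sum>i\<in>A - {r}. T (A - {i}) * e r k) = 0"
      using fin r by (intro sum.neutral) (auto intro!: Z1)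
    finally show ?thesis by simp
  qed
  have s2: "(\<Sum>(i,j)\<in>PP A. e i j * T (A - {i,j})) * e r k = (\<Sum>i\<in>A - {r}. - (e i k * T (A - {i})))"
  proof -
    have "(\<Sum>(i,j)\<in>PP A. e i j * T (A - {i,j})) * e r k = (\<Sum>x\<in>PP A. (case x of (i,j) \<Rightarrow> e i j * T (A - {i,j})) * e r k)"
      by (simp add: sum_distrib_right)
    also have "\<dots> = (\<Sum>x\<in>(\<lambda>i. (i,r)) ` (A - {r}). (case x of (i,j) \<Rightarrow> e i j * T (A - {i,j})) * e r k)"
    proof (rule sum.mono_neutral_right)
      show "finite (PP A)" using fin by (rule finite_PP)
      show "(\<lambda>i. (i,r)) ` (A - {r}) \<subseteq> PP A" using r by (auto simp: PP_def)
      show "\<forall>x\<in>PP A - (\<lambda>i. (i,r)) ` (A - {r}). (case x of (i,j) \<Rightarrow> e i j * T (A - {i,j})) * e r k = 0"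
      proof
        fix x assume "x \<in> PP A - (\<lambda>i. (i,r)) ` (A - {r})"
        then obtain i j where x: "x = (i,j)" "i \<in> A" "j \<in> A" "i \<noteq> j" "j \<noteq> r" by (auto simp: PP_def)
        have "e i j * T (A - {i,j}) * e r k = 0"
        proof (cases "i = r")
          case True
          then have "e i j * T (A - {i,j}) * e r k = T (A - {i,j}) * (e r j * e r k)" by (simp add: mult_ac)
          then show ?thesis by (simp add: e_rel1)
        next
          case False
          then have "T (A - {i,j}) * e r k = 0" using x fin r by (intro Z1) auto
          then show ?thesis by (simp add: mult.assoc)
        qed
        then show "(case x of (i,j) \<Rightarrow> e i j * T (A - {i,j})) * e r k = 0" using x by simp
      qed
    qed
    also have "\<dots> = (\<Sum>i\<in>A - {r}. e i r * T (A - {i,r}) * e r k)"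
      by (subst sum.reindex) (auto simp: inj_on_def)
    also have "\<dots> = (\<Sum>i\<in>A - {r}. - (e i k * T (A - {i})))"
    proof (rule sum.cong[OF refl])
      fix i assume i: "i \<in> A - {r}"
      have "e i r * T (A - {i,r}) * e r k = T (A - {i,r}) * (e i r * e r k)" by (simp add: mult_ac)
      also have "\<dots> = T (A - {i,r}) * (- (e i k * e r r))" by (simp only: e_rel3[of i r r k])
      also have "\<dots> = T (A - {i} - {r}) * (- (e i k * e r r))"
        by (metis Diff_insert2)
      also have "\<dots> = - (e i k * (e r r * T (A - {i} - {r})))"
        by (simp add: mult_ac)
      also have "e r r * T (A - {i} - {r}) = T (A - {i})"
        using i fin r by (subst T_remove[of "A - {i}" r]) auto
      finally show "e i r * T (A - {i,r}) * e r k = - (e i k * T (A - {i}))" .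
    qed
    finally show ?thesis .
  qed
  have s3: "(\<Sum>i\<in>A. e i k * T (A - {i})) = e r k * T (A - {r}) + (\<Sum>i\<in>A - {r}. e i k * T (A - {i}))"
    using fin r by (simp add: sum.remove)
  show ?thesis unfolding F0_def left_diff_distrib s1 s2 s3 by (simp add: sum_negf mult.commute)
qed

lemma F0_insert_expand:
  assumes fin: "finite A" and k: "k \<notin> A"
  shows "F0 (insert k A) = T A + e k k * F0 A - (\<Sum>j\<in>A. e k j * T (A - {j}))
            - (\<Sum>i\<in>A. e i k * T (A - {i}))"
proof -
  have s1: "(\<Sum>i\<in>insert k A. T (insert k A - {i})) = T A + e k k * (\<Sum>i\<in>A. T (A - {i}))"
  proof -
    have "(\<Sum>i\<in>insert k A. T (insert k A - {i})) = T (insert k A - {k}) + (\<Sum>i\<in>A. T (insert k A - {i}))"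
      using fin k by simp
    also have "insert k A - {k} = A" using k by auto
    also have "(\<Sum>i\<in>A. T (insert k A - {i})) = (\<Sum>i\<in>A. e k k * T (A - {i}))"
    proof (rule sum.cong[OF refl])
      fix i assume i: "i \<in> A"
      then have "insert k A - {i} = insert k (A - {i})" using k by auto
      then show "T (insert k A - {i}) = e k k * T (A - {i})" using fin k by (simp add: T_insert)
    qed
    finally show ?thesis by (simp add: sum_distrib_left)
  qed
  have PPe: "PP (insert k A) = PP A \<union> ((\<lambda>j. (k,j)) ` A \<union> (\<lambda>i. (i,k)) ` A)"
    using k by (auto simp: PP_def)
  have fPP: "finite (PP A)" using fin by (rule finite_PP)
  let ?h = "\<lambda>x. case x of (i,j) \<Rightarrow> e i j * T (insert k A - {i,j})"
  have s2: "(\<Sum>x\<in>PP (insert k A). ?h x) = e k k * (\<Sum>(i,j)\<in>PP A. e i j * T (A - {i,j}))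
      + (\<Sum>j\<in>A. e k j * T (A - {j})) + (\<Sum>i\<in>A. e i k * T (A - {i}))"
  proof -
    have "(\<Sum>x\<in>PP (insert k A). ?h x) = (\<Sum>x\<in>PP A. ?h x) + ((\<Sum>x\<in>(\<lambda>j. (k,j)) ` A. ?h x) + (\<Sum>x\<in>(\<lambda>i. (i,k)) ` A. ?h x))"
      unfolding PPe using fin fPP k
      by (subst sum.union_disjoint, simp, simp, force simp: PP_def, subst sum.union_disjoint) auto
    also have "(\<Sum>x\<in>PP A. ?h x) = e k k * (\<Sum>(i,j)\<in>PP A. e i j * T (A - {i,j}))"
      unfolding sum_distrib_left
    proof (rule sum.cong[OF refl])
      fix x assume "x \<in> PP A"
      then obtain i j where x: "x = (i,j)" "i \<in> A" "j \<in> A" by (auto simp: PP_def)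
      then have "insert k A - {i,j} = insert k (A - {i,j})" using k by auto
      then have "T (insert k A - {i,j}) = e k k * T (A - {i,j})" using fin k by (simp add: T_insert)
      then show "?h x = e k k * (case x of (i,j) \<Rightarrow> e i j * T (A - {i,j}))" using x by (simp add: mult_ac)
    qed
    also have "(\<Sum>x\<in>(\<lambda>j. (k,j)) ` A. ?h x) = (\<Sum>j\<in>A. e k j * T (A - {j}))"
    proof (subst sum.reindex)
      show "inj_on (\<lambda>j. (k,j)) A" by (auto simp: inj_on_def)
      show "sum (?h \<circ> (\<lambda>j. (k,j))) A = (\<Sum>j\<in>A. e k j * T (A - {j}))"
      proof (rule sum.cong[OF refl])
        fix j assume "j \<in> A"
        then have "insert k A - {k,j} = A - {j}" using k by auto
        then show "(?h \<circ> (\<lambda>j. (k,j))) j = e k j * T (A - {j})" by simp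
      qed
    qed
    also have "(\<Sum>x\<in>(\<lambda>i. (i,k)) ` A. ?h x) = (\<Sum>i\<in>A. e i k * T (A - {i}))"
    proof (subst sum.reindex)
      show "inj_on (\<lambda>i. (i,k)) A" by (auto simp: inj_on_def)
      show "sum (?h \<circ> (\<lambda>i. (i,k))) A = (\<Sum>i\<in>A. e i k * T (A - {i}))"
      proof (rule sum.cong[OF refl])
        fix i assume "i \<in> A"
        then have "insert k A - {i,k} = A - {i}" using k by auto
        then show "(?h \<circ> (\<lambda>i. (i,k))) i = e i k * T (A - {i})" by simp
      qed
    qed
    finally show ?thesis by (simp add: add.assoc)
  qed
  show ?thesis unfolding F0_def s1 s2 by (simp add: algebra_simps)
qed

lemma F0_insert:
  assumes fin: "finite A" and r: "r \<in> A" and k: "k \<notin> A"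
  shows "F0 (insert k A) = F0 A * q k r"
proof -
  have "F0 A * q k r = F0 A * e k k - F0 A * e k r - F0 A * e r k + F0 A * e r r"
    unfolding q_def by (simp add: algebra_simps)
  then show ?thesis
    unfolding F0_insert_expand[OF fin k] using F0_err[OF fin r] F0_ekr[OF fin r] F0_erk[OF fin r]
    by (simp add: algebra_simps)
qed

lemma PP_single: "PP {r} = {}" by (auto simp: PP_def)

lemma F0_single[simp]: "F0 {r} = 1"
  by (simp add: F0_def PP_single)

lemma ring_q2:
  fixes a b c d :: "'r::comm_ring_1"
  assumes "a*a=0" "a*b=0" "a*c=0" "b*b=0" "b*d=0" "c*c=0" "c*d=0" "d*d=0" "b*c = -(a*d)"
  shows "(a-b-c+d)*(a-b-c+d) = 0"
proof -
  have ba: "b*a = 0" "c*a = 0" "d*a = a*d" "c*b = b*c" "d*b = 0" "d*c = 0"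
    using assms by (simp_all add: mult.commute)
  have 1: "a*(a-b-c+d) = a*d" using assms by (simp add: right_diff_distrib distrib_left)
  have 2: "b*(a-b-c+d) = -(b*c)" using assms ba by (simp add: right_diff_distrib distrib_left)
  have 3: "c*(a-b-c+d) = -(b*c)" using assms ba by (simp add: right_diff_distrib distrib_left)
  have 4: "d*(a-b-c+d) = a*d" using assms ba by (simp add: right_diff_distrib distrib_left)
  have "(a-b-c+d)*(a-b-c+d) = a*(a-b-c+d) - b*(a-b-c+d) - c*(a-b-c+d) + d*(a-b-c+d)"
    by (simp add: left_diff_distrib distrib_right)
  also have "\<dots> = 0" unfolding 1 2 3 4 using assms(9) by simp
  finally show ?thesis .
qed

lemma ring_q1:
  fixes a b c d :: "'r::comm_ring_1"
  assumes "d*b=0" "d*c=0" "d*d=0"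
  shows "d*(a-b-c+d) = d*a"
  using assms by (simp add: algebra_simps)

lemma ring_q3:
  fixes a b c d x :: "'r::comm_ring_1"
  assumes "x*a=0" "x*b=0" "x*c=0" "x*d=0"
  shows "x*(a-b-c+d) = 0"
  using assms by (simp add: algebra_simps)

lemma qq: assumes "u \<noteq> v" shows "q u v * q u v = 0"
  unfolding q_def
  by (rule ring_q2) (simp_all add: e_rel1 e_rel2 e_rel3[of u v v u])

lemma err_q: assumes "k \<noteq> r" shows "e r r * q k r = e r r * e k k"
  unfolding q_def by (rule ring_q1) (simp_all add: e_rel1 e_rel2)

lemma euv_q: "e u u * e v v * q u v = 0"
  unfolding q_def
proof (rule ring_q3)
  have "e u u * e v v * e u u = e v v * (e u u * e u u)" by (simp add: mult_ac)
  then show "e u u * e v v * e u u = 0" by (simp add: e_rel1)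
  have "e u u * e v v * e u v = e v v * (e u u * e u v)" by (simp add: mult_ac)
  then show "e u u * e v v * e u v = 0" by (simp add: e_rel1)
  have "e u u * e v v * e v u = e v v * (e u u * e v u)" by (simp add: mult_ac)
  then show "e u u * e v v * e v u = 0" by (simp add: e_rel2)
  have "e u u * e v v * e v v = e u u * (e v v * e v v)" by (simp add: mult_ac)
  then show "e u u * e v v * e v v = 0" by (simp add: e_rel1)
qed

lemma T_q:
  assumes fin: "finite X" and r: "r \<in> X" and k: "k \<notin> X"
  shows "T X * q k r = T (insert k X)"
proof -
  have kr: "k \<noteq> r" using r k by auto
  have "T X * q k r = T (X - {r}) * (e r r * q k r)" using fin r by (simp add: T_remove mult_ac)
  also have "\<dots> = T (X - {r}) * e r r * e k k" using kr by (simp add: err_q mult_ac)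
  also have "\<dots> = T (insert k X)" using fin r k by (simp add: T_remove T_insert mult_ac)
  finally show ?thesis .
qed

lemma F0_merge_aux:
  assumes fA: "finite A" and v: "v \<in> A"
  shows "finite B \<Longrightarrow> v \<notin> B \<Longrightarrow> A \<inter> B = {} \<Longrightarrow> F0 A * F0 (insert v B) = F0 (A \<union> insert v B)"
proof (induction B rule: finite_induct)
  case empty
  then show ?case using v by (simp add: insert_absorb)
next
  case (insert k B)
  have k: "k \<noteq> v" "k \<notin> A" using insert by auto
  have "F0 (insert v (insert k B)) = F0 (insert k (insert v B))" by (simp add: insert_commute)
  also have "\<dots> = F0 (insert v B) * q k v" using insert k by (intro F0_insert) auto
  finally have 1: "F0 (insert v (insert k B)) = F0 (insert v B) * q k v" .
  have "A \<union> insert v (insert k B) = insert k (A \<union> insert v B)" by auto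
  then have 2: "F0 (A \<union> insert v (insert k B)) = F0 (A \<union> insert v B) * q k v"
    using insert k fA by (simp add: F0_insert)
  have IH: "F0 A * F0 (insert v B) = F0 (A \<union> insert v B)" using insert by auto
  show ?case unfolding 1 2 IH[symmetric] by (simp add: mult_ac)
qed

lemma F0_merge:
  assumes "finite A" "finite B" "A \<inter> B = {v}"
  shows "F0 A * F0 B = F0 (A \<union> B)"
proof -
  have "B = insert v (B - {v})" "v \<in> A" using assms by auto
  then show ?thesis using F0_merge_aux[of A v "B - {v}"] assms by auto
qed

lemma TF0_merge_aux:
  assumes fA: "finite A" and v: "v \<in> A"
  shows "finite B \<Longrightarrow> v \<notin> B \<Longrightarrow> A \<inter> B = {} \<Longrightarrow> T A * F0 (insert v B) = T (A \<union> insert v B)"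
proof (induction B rule: finite_induct)
  case empty
  then show ?case using v by (simp add: insert_absorb)
next
  case (insert k B)
  have k: "k \<noteq> v" "k \<notin> A" using insert by auto
  have "F0 (insert v (insert k B)) = F0 (insert k (insert v B))" by (simp add: insert_commute)
  also have "\<dots> = F0 (insert v B) * q k v" using insert k by (intro F0_insert) auto
  finally have 1: "F0 (insert v (insert k B)) = F0 (insert v B) * q k v" .
  have e: "A \<union> insert v (insert k B) = insert k (A \<union> insert v B)" by auto
  have 2: "T (A \<union> insert v B) * q k v = T (A \<union> insert v (insert k B))"
    unfolding e using insert k fA v by (intro T_q) auto
  have IH: "T A * F0 (insert v B) = T (A \<union> insert v B)" using insert by auto
  show ?case unfolding 1 2[symmetric] IH[symmetric] by (simp add: mult_ac)
qed

lemma TF0_merge: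
  assumes "finite A" "finite B" "A \<inter> B = {v}"
  shows "T A * F0 B = T (A \<union> B)"
proof -
  have "B = insert v (B - {v})" "v \<in> A" using assms by auto
  then show ?thesis using TF0_merge_aux[of A v "B - {v}"] assms by auto
qed

lemma TT_zero:
  assumes "finite A" "finite B" "v \<in> A" "v \<in> B"
  shows "T A * T B = 0"
proof -
  have "T A * T B = T (A - {v}) * T (B - {v}) * (e v v * e v v)"
    using assms by (simp add: T_remove[of A v] T_remove[of B v] mult_ac)
  then show ?thesis by (simp add: e_rel1)
qed

lemma F0_split:
  assumes "finite A" "u \<in> A" "v \<in> A" "u \<noteq> v"
  shows "F0 A = F0 (A - {u}) * q u v"
proof -
  have "A = insert u (A - {u})" using assms by auto
  then have "F0 A = F0 (insert u (A - {u}))" by simp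
  also have "\<dots> = F0 (A - {u}) * q u v" using assms by (intro F0_insert) auto
  finally show ?thesis .
qed

lemma FF_zero:
  assumes "finite A" "finite B" "u \<in> A" "v \<in> A" "u \<in> B" "v \<in> B" "u \<noteq> v"
  shows "F0 A * F0 B = 0"
proof -
  have "F0 A * F0 B = F0 (A - {u}) * F0 (B - {u}) * (q u v * q u v)"
    using assms by (simp add: F0_split[of A u v] F0_split[of B u v] mult_ac)
  then show ?thesis using qq[OF assms(7)] by simp
qed

lemma TF_zero:
  assumes "finite A" "finite B" "u \<in> A" "v \<in> A" "u \<in> B" "v \<in> B" "u \<noteq> v"
  shows "T A * F0 B = 0"
proof -
  have "T A = e u u * (e v v * T (A - {u} - {v}))"
    using assms by (simp add: T_remove[of A u] T_remove[of "A - {u}" v])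
  then have "T A * F0 B = T (A - {u} - {v}) * F0 (B - {u}) * (e u u * e v v * q u v)"
    using assms by (simp add: F0_split[of B u v] mult_ac)
  then show ?thesis by (simp add: euv_q)
qed

lift_definition cst :: "complex \<Rightarrow> 'a::linorder ev" is gconst
  by (simp add: evp_def fz_def gconst_def)

lemma cst_add: "cst (a + b) = cst a + cst b"
  by transfer (simp add: gconst_def gadd_def fun_eq_iff)

definition Gf :: "complex \<Rightarrow> 'a::linorder set \<Rightarrow> 'a ev" where
  "Gf N A = F0 A - cst N * T A"

lemma G_merge:
  assumes "finite A" "finite B" "A \<inter> B = {v}"
  shows "Gf N A * Gf M B = Gf (N + M) (A \<union> B)"
proof -
  have 1: "F0 A * F0 B = F0 (A \<union> B)" using assms by (rule F0_merge)
  have 2: "T A * F0 B = T (A \<union> B)" using assms by (rule TF0_merge)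
  have "T B * F0 A = T (B \<union> A)" using assms by (intro TF0_merge) auto
  then have 3: "F0 A * T B = T (A \<union> B)" by (simp add: mult.commute Un_commute)
  have 4: "T A * T B = 0" using assms by (intro TT_zero[of A B v]) auto
  have "Gf N A * Gf M B = F0 A * F0 B - cst M * (F0 A * T B) - cst N * (T A * F0 B)
      + cst N * cst M * (T A * T B)"
    unfolding Gf_def by (simp add: algebra_simps)
  also have "\<dots> = Gf (N + M) (A \<union> B)" unfolding 1 2 3 4 Gf_def cst_add by (simp add: algebra_simps)
  finally show ?thesis .
qed

lemma G_zero:
  assumes "finite A" "finite B" "u \<in> A" "v \<in> A" "u \<in> B" "v \<in> B" "u \<noteq> v"
  shows "Gf N A * Gf M B = 0"
proof -
  have 1: "F0 A * F0 B = 0" using assms by (rule FF_zero)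
  have 2: "T A * F0 B = 0" using assms by (rule TF_zero)
  have "T B * F0 A = 0" using assms by (intro TF_zero[of B A u v]) auto
  then have 3: "F0 A * T B = 0" by (simp add: mult.commute)
  have 4: "T A * T B = 0" using assms by (intro TT_zero[of A B v]) auto
  have "Gf N A * Gf M B = F0 A * F0 B - cst M * (F0 A * T B) - cst N * (T A * F0 B)
      + cst N * cst M * (T A * T B)"
    unfolding Gf_def by (simp add: algebra_simps)
  then show ?thesis unfolding 1 2 3 4 by simp
qed


definition stp :: "'a set set \<Rightarrow> 'a \<Rightarrow> 'a \<Rightarrow> bool" where
  "stp F x y \<longleftrightarrow> (\<exists>A\<in>F. x \<in> A \<and> y \<in> A)"

lemma stp_sym: "stp F x y \<Longrightarrow> stp F y x" by (auto simp: stp_def)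

lemma is_walk_Cons:
  "is_walk F (v # vs) (A # es) \<longleftrightarrow> A \<in> F \<and> v \<in> A \<and> vs \<noteq> [] \<and> hd vs \<in> A \<and> is_walk F vs es"
proof
  assume w: "is_walk F (v # vs) (A # es)"
  then have l: "length vs = Suc (length es)" by (simp add: is_walk_def)
  then have ne: "vs \<noteq> []" by auto
  have all: "\<forall>i<length (A#es). (A#es)!i \<in> F \<and> (v#vs)!i \<in> (A#es)!i \<and> (v#vs)!Suc i \<in> (A#es)!i"
    using w by (simp add: is_walk_def)
  have h0: "A \<in> F \<and> v \<in> A \<and> vs ! 0 \<in> A" using all[rule_format, of 0] by simp
  have "\<forall>i<length es. es ! i \<in> F \<and> vs ! i \<in> es ! i \<and> vs ! Suc i \<in> es ! i"
  proof (intro allI impI)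
    fix i assume "i < length es"
    then have "Suc i < length (A # es)" by simp
    then show "es ! i \<in> F \<and> vs ! i \<in> es ! i \<and> vs ! Suc i \<in> es ! i" using all[rule_format, of "Suc i"]
      by simp
  qed
  then show "A \<in> F \<and> v \<in> A \<and> vs \<noteq> [] \<and> hd vs \<in> A \<and> is_walk F vs es"
    using h0 ne l by (simp add: is_walk_def hd_conv_nth)
next
  assume a: "A \<in> F \<and> v \<in> A \<and> vs \<noteq> [] \<and> hd vs \<in> A \<and> is_walk F vs es"
  show "is_walk F (v # vs) (A # es)" unfolding is_walk_def
  proof (rule conjI; (intro allI impI)?)
    show "length (v # vs) = Suc (length (A # es))" using a by (simp add: is_walk_def)
    fix i assume i: "i < length (A # es)"
    show "(A # es) ! i \<in> F \<and> (v # vs) ! i \<in> (A # es) ! i \<and> (v # vs) ! Suc i \<in> (A # es) ! i"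
    proof (cases i)
      case 0 then show ?thesis using a by (simp add: hd_conv_nth[symmetric])
    next
      case (Suc j) then show ?thesis using a i by (simp add: is_walk_def)
    qed
  qed
qed

lemma is_walk_Nil: "is_walk F vs [] \<longleftrightarrow> (\<exists>v. vs = [v])"
  by (auto simp: is_walk_def length_Suc_conv)

lemma is_walk_nonempty: "is_walk F vs es \<Longrightarrow> vs \<noteq> []"
  by (auto simp: is_walk_def)

lemma is_walk_mono: "is_walk F vs es \<Longrightarrow> F \<subseteq> G \<Longrightarrow> is_walk G vs es"
  by (auto simp: is_walk_def)

lemma walk_rtranclp: "is_walk F vs es \<Longrightarrow> (stp F)\<^sup>*\<^sup>* (hd vs) (last vs)"
proof (induction es arbitrary: vs)
  case Nil then show ?case by (auto simp: is_walk_Nil)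
next
  case (Cons A es)
  then obtain v vs' where vs: "vs = v # vs'" by (cases vs) (auto simp: is_walk_def)
  then have a: "A \<in> F" "v \<in> A" "vs' \<noteq> []" "hd vs' \<in> A" "is_walk F vs' es" using Cons.prems by (auto simp: is_walk_Cons)
  have "stp F v (hd vs')" using a by (auto simp: stp_def)
  moreover have "(stp F)\<^sup>*\<^sup>* (hd vs') (last vs')" using Cons.IH a by blast
  ultimately show ?case using vs a by (auto intro: converse_rtranclp_into_rtranclp)
qed

lemma rtranclp_wc: "(stp F)\<^sup>*\<^sup>* u v \<Longrightarrow> walk_connected F u v"
proof (induction rule: converse_rtranclp_induct)
  case base
  have "is_walk F [v] []" by (simp add: is_walk_def)
  then show ?case unfolding walk_connected_def by force
next
  case (step x y)
  then obtain vs es where w: "is_walk F vs es" "hd vs = y" "last vs = v" by (auto simp: walk_connected_def)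
  obtain A where A: "A \<in> F" "x \<in> A" "y \<in> A" using step by (auto simp: stp_def)
  have ne: "vs \<noteq> []" using w(1) by (rule is_walk_nonempty)
  have "is_walk F (x # vs) (A # es)" using A w ne by (simp add: is_walk_Cons)
  then show ?case unfolding walk_connected_def using w ne by force
qed

lemma wc_iff: "walk_connected F u v \<longleftrightarrow> (stp F)\<^sup>*\<^sup>* u v"
  using walk_rtranclp rtranclp_wc unfolding walk_connected_def by metis

lemma rtranclp_stp_sym: "(stp F)\<^sup>*\<^sup>* u v \<Longrightarrow> (stp F)\<^sup>*\<^sup>* v u"
proof (induction rule: rtranclp_induct)
  case (step y z)
  then show ?case by (meson converse_rtranclp_into_rtranclp stp_sym)
qed simp

inductive spath :: "'a set set \<Rightarrow> 'a list \<Rightarrow> 'a set list \<Rightarrow> bool" for F where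
  sp0: "spath F [v] []"
| spC: "spath F vs es \<Longrightarrow> v \<notin> set vs \<Longrightarrow> A \<in> F \<Longrightarrow> A \<notin> set es \<Longrightarrow> v \<in> A \<Longrightarrow> hd vs \<in> A
        \<Longrightarrow> spath F (v # vs) (A # es)"

lemma spath_props: "spath F vs es \<Longrightarrow> is_walk F vs es \<and> distinct vs \<and> distinct es \<and> vs \<noteq> []"
proof (induction rule: spath.induct)
  case (sp0 v) then show ?case by (simp add: is_walk_def)
next
  case (spC vs es v A) then show ?case by (simp add: is_walk_Cons)
qed

lemma spath_drop: "spath F vs es \<Longrightarrow> k \<le> length es \<Longrightarrow> spath F (drop k vs) (drop k es)"
proof (induction arbitrary: k rule: spath.induct)
  case (sp0 v) then show ?case by (simp add: spath.sp0)
next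
  case (spC vs es v A)
  show ?case
  proof (cases k)
    case 0 then show ?thesis using spC by (simp add: spath.spC)
  next
    case (Suc j) then show ?thesis using spC by simp
  qed
qed

lemma distinct_nth_notin_drop: "distinct xs \<Longrightarrow> k < length xs \<Longrightarrow> xs ! k \<notin> set (drop (Suc k) xs)"
  by (auto simp: in_set_conv_nth nth_eq_iff_index_eq)

lemma rtranclp_spath: "(stp F)\<^sup>*\<^sup>* u w \<Longrightarrow> \<exists>vs es. spath F vs es \<and> hd vs = u \<and> last vs = w"
proof (induction rule: converse_rtranclp_induct)
  case base then show ?case using spath.sp0 by force
next
  case (step x y)
  then obtain vs es where p: "spath F vs es" "hd vs = y" "last vs = w" by blast
  obtain A where A: "A \<in> F" "x \<in> A" "y \<in> A" using step by (auto simp: stp_def)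
  have pr: "is_walk F vs es" "distinct vs" "distinct es" "vs \<noteq> []" using spath_props[OF p(1)] by auto
  have len: "length vs = Suc (length es)" using pr by (simp add: is_walk_def)
  show ?case
  proof (cases "x \<in> set vs")
    case True
    then obtain k where k: "k < length vs" "vs ! k = x" by (auto simp: in_set_conv_nth)
    have "spath F (drop k vs) (drop k es)" using k len by (intro spath_drop p(1)) auto
    moreover have "hd (drop k vs) = x" using k by (simp add: hd_drop_conv_nth)
    moreover have "last (drop k vs) = w" using k p(3) by simp
    ultimately show ?thesis by blast
  next
    case xn: False
    show ?thesis
    proof (cases "A \<in> set es")
      case True
      then obtain k where k: "k < length es" "es ! k = A" by (auto simp: in_set_conv_nth)
      have sd: "spath F (drop (Suc k) vs) (drop (Suc k) es)" using k len by (intro spath_drop p(1)) auto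
      have hd: "hd (drop (Suc k) vs) = vs ! Suc k" using k len by (simp add: hd_drop_conv_nth)
      have "vs ! Suc k \<in> A" using pr(1) k by (auto simp: is_walk_def)
      moreover have "x \<notin> set (drop (Suc k) vs)" using xn by (meson in_set_dropD)
      moreover have "A \<notin> set (drop (Suc k) es)" using distinct_nth_notin_drop[OF pr(3) k(1)] k by simp
      ultimately have "spath F (x # drop (Suc k) vs) (A # drop (Suc k) es)"
        using sd A hd by (intro spath.spC) auto
      moreover have "last (drop (Suc k) vs) = w" using k len p(3) by simp
      ultimately show ?thesis using k len by (intro exI[of _ "x # drop (Suc k) vs"]) auto
    next
      case False
      then have "spath F (x # vs) (A # es)" using p A xn by (intro spath.spC) auto
      then show ?thesis using p pr by (intro exI[of _ "x # vs"]) auto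
    qed
  qed
qed

lemma is_cycle_mono: "is_cycle F vs es \<Longrightarrow> F \<subseteq> G \<Longrightarrow> is_cycle G vs es"
  by (auto simp: is_cycle_def intro: is_walk_mono)

lemma hyperforest_mono: "hyperforest G \<Longrightarrow> F \<subseteq> G \<Longrightarrow> hyperforest F"
  unfolding hyperforest_def using is_cycle_mono by blast

lemma hyperforest_empty: "hyperforest ({} :: 'a set set)"
proof -
  have "es = []" if "is_walk {} vs es" for vs :: "'a list" and es
    using that by (cases es) (auto simp: is_walk_def)
  then show ?thesis unfolding hyperforest_def is_cycle_def by fastforce
qed

lemma last_notin_butlast: "distinct xs \<Longrightarrow> xs \<noteq> [] \<Longrightarrow> last xs \<notin> set (butlast xs)"
proof -
  assume "distinct xs" "xs \<noteq> []"
  then have "distinct (butlast xs @ [last xs])" by simp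
  then show ?thesis by simp
qed

lemma cycle_create:
  assumes "A \<notin> F" "u \<in> A" "v \<in> A" "u \<noteq> v" "walk_connected F u v"
  shows "\<not> hyperforest (insert A F)"
proof -
  have "(stp F)\<^sup>*\<^sup>* u v" using assms(5) by (simp add: wc_iff)
  from rtranclp_spath[OF this] obtain vs es where p: "spath F vs es" "hd vs = u" "last vs = v"
    by blast
  have pr: "is_walk F vs es" "distinct vs" "distinct es" "vs \<noteq> []" using spath_props[OF p(1)] by auto
  have esne: "es \<noteq> []" using pr(1) p assms(4) by (auto simp: is_walk_Nil)
  have "A \<notin> set es" using pr(1) assms(1) by (auto simp: is_walk_def in_set_conv_nth)
  moreover have "is_walk (insert A F) (v # vs) (A # es)"
  proof -
    have "is_walk (insert A F) vs es" using pr(1) by (rule is_walk_mono) auto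
    then show ?thesis using pr p assms by (simp add: is_walk_Cons)
  qed
  moreover have "distinct (butlast (v # vs))"
    using pr p last_notin_butlast[of vs] by (simp add: distinct_butlast)
  moreover have "last (v # vs) = hd (v # vs)" using pr p by simp
  moreover have "length (A # es) \<ge> 2" using esne by (cases es) auto
  ultimately have "is_cycle (insert A F) (v # vs) (A # es)" using pr by (simp add: is_cycle_def)
  then show ?thesis unfolding hyperforest_def by blast
qed

lemma walk_seg:
  assumes w: "is_walk G vs es" and ij: "i \<le> j" "j \<le> length es"
    and F: "\<And>l. i \<le> l \<Longrightarrow> l < j \<Longrightarrow> es ! l \<in> F"
  shows "(stp F)\<^sup>*\<^sup>* (vs ! i) (vs ! j)"
  using ij F
proof (induction j)
  case 0 then show ?case by simp
next
  case (Suc j)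
  show ?case
  proof (cases "i = Suc j")
    case True then show ?thesis by simp
  next
    case False
    then have ij': "i \<le> j" "j < length es" using Suc by auto
    have IH: "(stp F)\<^sup>*\<^sup>* (vs ! i) (vs ! j)" using Suc ij' by auto
    have "stp F (vs ! j) (vs ! Suc j)" using w ij' Suc.prems(3)[of j] unfolding stp_def is_walk_def by auto
    with IH show ?thesis by (rule rtranclp.rtrancl_into_rtrancl)
  qed
qed

lemma cycle_preserve:
  assumes hf: "hyperforest F"
    and H: "\<And>u v. u \<in> A \<Longrightarrow> v \<in> A \<Longrightarrow> walk_connected F u v \<Longrightarrow> u = v"
  shows "hyperforest (insert A F)"
  unfolding hyperforest_def
proof
  assume "\<exists>vs es. is_cycle (insert A F) vs es"
  then obtain vs es where c: "is_cycle (insert A F) vs es" by blast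
  then have w: "is_walk (insert A F) vs es" and n2: "length es \<ge> 2" and db: "distinct (butlast vs)"
    and lh: "last vs = hd vs" and de: "distinct es" by (auto simp: is_cycle_def)
  have len: "length vs = Suc (length es)" using w by (simp add: is_walk_def)
  show False
  proof (cases "A \<in> set es")
    case False
    then have "is_walk F vs es" using w by (auto simp: is_walk_def in_set_conv_nth)
    then have "is_cycle F vs es" using c by (simp add: is_cycle_def)
    then show False using hf by (auto simp: hyperforest_def)
  next
    case True
    then obtain m where m: "m < length es" "es ! m = A" by (auto simp: in_set_conv_nth)
    let ?n = "length es"
    have aA: "vs ! m \<in> A" "vs ! Suc m \<in> A" using w m by (auto simp: is_walk_def)
    have notA: "es ! l \<in> F" if "l < ?n" "l \<noteq> m" for l
    proof -
      have "es ! l \<noteq> A" using de m that by (metis nth_eq_iff_index_eq)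
      then show ?thesis using w that by (auto simp: is_walk_def)
    qed
    have lastn: "vs ! ?n = vs ! 0" using lh len
      by (metis hd_conv_nth last_conv_nth diff_Suc_1 is_walk_nonempty[OF w])
    have bl: "butlast vs ! i = vs ! i" if "i < ?n" for i using that len by (simp add: nth_butlast)
    have neq: "vs ! m \<noteq> vs ! Suc m"
    proof (cases "Suc m < ?n")
      case True
      have "butlast vs ! m \<noteq> butlast vs ! Suc m"
        using nth_eq_iff_index_eq[OF db, of m "Suc m"] True len by simp
      then show ?thesis using bl[of m] bl[of "Suc m"] True by simp
    next
      case False
      then have "Suc m = ?n" using m by auto
      then have "vs ! Suc m = vs ! 0" "0 < m" using lastn n2 by auto
      have "butlast vs ! m \<noteq> butlast vs ! 0"
        using nth_eq_iff_index_eq[OF db, of m 0] \<open>0 < m\<close> m len by (cases es) auto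
      then show ?thesis using bl[of m] bl[of 0] m \<open>vs ! Suc m = vs ! 0\<close> by (cases es) auto
    qed
    have r1: "(stp F)\<^sup>*\<^sup>* (vs ! Suc m) (vs ! ?n)"
      using m by (intro walk_seg[OF w]) (auto intro: notA)
    have r2: "(stp F)\<^sup>*\<^sup>* (vs ! 0) (vs ! m)"
      using m by (intro walk_seg[OF w]) (auto intro: notA)
    have "(stp F)\<^sup>*\<^sup>* (vs ! Suc m) (vs ! m)" using r1 r2 lastn by auto
    then have "vs ! Suc m = vs ! m" using H aA unfolding wc_iff by blast
    then show False using neq by simp
  qed
qed


definition cp :: "'a set \<Rightarrow> 'a set set \<Rightarrow> 'a \<Rightarrow> 'a set" where
  "cp V F u = {v \<in> V. (stp F)\<^sup>*\<^sup>* u v}"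

lemma components_cp: "components V F = cp V F ` V"
  unfolding components_def cp_def wc_iff by auto

lemma cp_self: "u \<in> V \<Longrightarrow> u \<in> cp V F u" by (simp add: cp_def)

lemma cp_eq: "v \<in> cp V F u \<Longrightarrow> cp V F v = cp V F u"
  unfolding cp_def by (auto intro: rtranclp_trans rtranclp_stp_sym)

lemma comps_disj: "C \<in> components V F \<Longrightarrow> C' \<in> components V F \<Longrightarrow> x \<in> C \<Longrightarrow> x \<in> C' \<Longrightarrow> C = C'"
  unfolding components_cp by (metis cp_eq imageE)

lemma comps_sub: "C \<in> components V F \<Longrightarrow> C \<subseteq> V"
  unfolding components_cp cp_def by auto

lemma comps_ne: "C \<in> components V F \<Longrightarrow> C \<noteq> {}"
  unfolding components_cp using cp_self by fastforce

lemma comps_union: "\<Union>(components V F) = V"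
  unfolding components_cp using cp_self by (fastforce simp: cp_def)

lemma comps_finite: "finite V \<Longrightarrow> finite (components V F)"
  unfolding components_cp by simp

lemma comp_of: "C \<in> components V F \<Longrightarrow> x \<in> C \<Longrightarrow> C = cp V F x"
  unfolding components_cp by (metis cp_eq imageE)

lemma cp_in: "x \<in> V \<Longrightarrow> cp V F x \<in> components V F"
  unfolding components_cp by simp

lemma edge_in_comp:
  assumes "B \<in> F" "B \<subseteq> V" "b \<in> B"
  shows "B \<subseteq> cp V F b"
proof
  fix x assume "x \<in> B"
  then have "stp F b x" using assms by (auto simp: stp_def)
  then show "x \<in> cp V F b" using assms \<open>x \<in> B\<close> by (auto simp: cp_def)
qed

lemma rtranclp_insert:
  assumes "(stp (insert A F))\<^sup>*\<^sup>* x y"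
  shows "(stp F)\<^sup>*\<^sup>* x y \<or> ((\<exists>a\<in>A. (stp F)\<^sup>*\<^sup>* x a) \<and> (\<exists>b\<in>A. (stp F)\<^sup>*\<^sup>* b y))"
  using assms
proof (induction rule: rtranclp_induct)
  case base then show ?case by simp
next
  case (step y z)
  from step(2) consider "stp F y z" | "y \<in> A" "z \<in> A" by (auto simp: stp_def)
  then show ?case
  proof cases
    case 1 then show ?thesis using step(3) by (meson rtranclp.rtrancl_into_rtrancl)
  next
    case 2 then show ?thesis using step(3) by blast
  qed
qed

lemma stp_mono: "(stp F)\<^sup>*\<^sup>* x y \<Longrightarrow> F \<subseteq> G \<Longrightarrow> (stp G)\<^sup>*\<^sup>* x y"
proof (induction rule: rtranclp_induct)
  case (step y z)
  then have "stp G y z" by (auto simp: stp_def)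
  with step show ?case by (meson rtranclp.rtrancl_into_rtrancl)
qed simp

lemma rtranclp_insert_iff:
  "(stp (insert A F))\<^sup>*\<^sup>* x y \<longleftrightarrow>
     (stp F)\<^sup>*\<^sup>* x y \<or> ((\<exists>a\<in>A. (stp F)\<^sup>*\<^sup>* x a) \<and> (\<exists>b\<in>A. (stp F)\<^sup>*\<^sup>* b y))"
proof
  assume "(stp F)\<^sup>*\<^sup>* x y \<or> ((\<exists>a\<in>A. (stp F)\<^sup>*\<^sup>* x a) \<and> (\<exists>b\<in>A. (stp F)\<^sup>*\<^sup>* b y))"
  then show "(stp (insert A F))\<^sup>*\<^sup>* x y"
  proof
    assume "(stp F)\<^sup>*\<^sup>* x y" then show ?thesis by (rule stp_mono) auto
  next
    assume "(\<exists>a\<in>A. (stp F)\<^sup>*\<^sup>* x a) \<and> (\<exists>b\<in>A. (stp F)\<^sup>*\<^sup>* b y)"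
    then obtain a b where ab: "a \<in> A" "b \<in> A" "(stp F)\<^sup>*\<^sup>* x a" "(stp F)\<^sup>*\<^sup>* b y" by blast
    have 1: "(stp (insert A F))\<^sup>*\<^sup>* x a" using ab(3) by (rule stp_mono) auto
    have 2: "(stp (insert A F))\<^sup>*\<^sup>* b y" using ab(4) by (rule stp_mono) auto
    have "stp (insert A F) a b" using ab by (auto simp: stp_def)
    then show ?thesis using 1 2 by (meson rtranclp.rtrancl_into_rtrancl rtranclp_trans)
  qed
qed (rule rtranclp_insert)

definition hitK :: "'a set \<Rightarrow> 'a set set \<Rightarrow> 'a set \<Rightarrow> 'a set set" where
  "hitK V F A = {C \<in> components V F. C \<inter> A \<noteq> {}}"

lemma cp_insert:
  assumes AV: "A \<subseteq> V" and x: "x \<in> V"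
  shows "cp V (insert A F) x = (if cp V F x \<inter> A \<noteq> {} then \<Union>(hitK V F A) else cp V F x)"
proof -
  have M: "\<Union>(hitK V F A) = {y \<in> V. \<exists>b\<in>A. (stp F)\<^sup>*\<^sup>* b y}"
  proof (intro equalityI subsetI)
    fix y assume "y \<in> \<Union>(hitK V F A)"
    then obtain C where C: "C \<in> components V F" "C \<inter> A \<noteq> {}" "y \<in> C" by (auto simp: hitK_def)
    then obtain a where a: "a \<in> C" "a \<in> A" by auto
    have "C = cp V F a" using C a comp_of by metis
    then show "y \<in> {y \<in> V. \<exists>b\<in>A. (stp F)\<^sup>*\<^sup>* b y}" using C a by (auto simp: cp_def)
  next
    fix y assume "y \<in> {y \<in> V. \<exists>b\<in>A. (stp F)\<^sup>*\<^sup>* b y}"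
    then obtain b where b: "y \<in> V" "b \<in> A" "(stp F)\<^sup>*\<^sup>* b y" by blast
    have "cp V F b \<in> hitK V F A" using b AV cp_self[of b V F] cp_in[of b V F] by (auto simp: hitK_def)
    moreover have "y \<in> cp V F b" using b by (simp add: cp_def)
    ultimately show "y \<in> \<Union>(hitK V F A)" by blast
  qed
  show ?thesis
  proof (cases "cp V F x \<inter> A \<noteq> {}")
    case True
    then obtain a where a: "a \<in> A" "(stp F)\<^sup>*\<^sup>* x a" by (auto simp: cp_def)
    have "cp V (insert A F) x = {y \<in> V. \<exists>b\<in>A. (stp F)\<^sup>*\<^sup>* b y}"
      unfolding cp_def rtranclp_insert_iff using a
      by (auto intro: rtranclp_trans rtranclp_stp_sym)
    then show ?thesis using True M by simp
  next
    case False
    then have na: "\<not> (\<exists>a\<in>A. (stp F)\<^sup>*\<^sup>* x a)" using AV by (auto simp: cp_def)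
    have "cp V (insert A F) x = cp V F x"
      unfolding cp_def rtranclp_insert_iff using na by auto
    then show ?thesis using False by simp
  qed
qed

lemma comps_insert:
  assumes AV: "A \<subseteq> V" and Ane: "A \<noteq> {}"
  shows "components V (insert A F) = insert (\<Union>(hitK V F A)) (components V F - hitK V F A)"
proof -
  obtain a where a: "a \<in> A" using Ane by auto
  show ?thesis
  proof (intro equalityI subsetI)
    fix C assume "C \<in> components V (insert A F)"
    then obtain x where x: "x \<in> V" "C = cp V (insert A F) x" unfolding components_cp by auto
    show "C \<in> insert (\<Union>(hitK V F A)) (components V F - hitK V F A)"
    proof (cases "cp V F x \<inter> A \<noteq> {}")
      case True then show ?thesis using x cp_insert[OF AV x(1)] by simp
    next
      case False then show ?thesis using x cp_insert[OF AV x(1)] cp_in[OF x(1), of F] by (simp add: hitK_def)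
    qed
  next
    fix C assume C: "C \<in> insert (\<Union>(hitK V F A)) (components V F - hitK V F A)"
    show "C \<in> components V (insert A F)"
    proof (cases "C = \<Union>(hitK V F A)")
      case True
      have "a \<in> V" using a AV by auto
      then have "a \<in> cp V F a" by (rule cp_self)
      then have "cp V F a \<inter> A \<noteq> {}" using a by auto
      then have "cp V (insert A F) a = \<Union>(hitK V F A)" using cp_insert[OF AV \<open>a \<in> V\<close>, of F] by simp
      then show ?thesis using True \<open>a \<in> V\<close> unfolding components_cp by auto
    next
      case False
      then have C': "C \<in> components V F" "C \<inter> A = {}" using C by (auto simp: hitK_def)
      then obtain x where x: "x \<in> V" "C = cp V F x" unfolding components_cp by auto
      then have "cp V (insert A F) x = C" using cp_insert[OF AV x(1)] C' by simp
      then show ?thesis using x unfolding components_cp by auto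
    qed
  qed
qed


lemma cst_0: "cst 0 = 0" by transfer (simp add: gconst_def fun_eq_iff)

lemma Gf_single0: "Gf 0 {u} = 1" by (simp add: Gf_def cst_0)

lemma G_merge_set:
  assumes "finite K" "finite A"
  shows "(\<forall>C\<in>K. finite C \<and> (\<exists>v. C \<inter> A = {v})) \<Longrightarrow> (\<forall>C\<in>K. \<forall>C'\<in>K. C \<noteq> C' \<longrightarrow> C \<inter> C' = {})
    \<Longrightarrow> Gf N A * (\<Prod>C\<in>K. Gf (n C) C) = Gf (N + (\<Sum>C\<in>K. n C)) (A \<union> \<Union>K)"
  using assms(1)
proof (induction K rule: finite_induct)
  case empty then show ?case by simp
next
  case (insert C K)
  have p1: "\<forall>C\<in>K. finite C \<and> (\<exists>v. C \<inter> A = {v})" using insert.prems(1) by blast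
  have p2: "\<forall>C\<in>K. \<forall>C'\<in>K. C \<noteq> C' \<longrightarrow> C \<inter> C' = {}" using insert.prems(2) by blast
  have IH: "Gf N A * (\<Prod>C\<in>K. Gf (n C) C) = Gf (N + (\<Sum>C\<in>K. n C)) (A \<union> \<Union>K)"
    using insert.IH p1 p2 by blast
  have fC: "finite C" and "\<exists>v. C \<inter> A = {v}" using insert.prems(1) by auto
  then obtain v where v: "C \<inter> A = {v}" by blast
  have dj: "\<Union>K \<inter> C = {}"
  proof -
    have "C' \<inter> C = {}" if "C' \<in> K" for C'
      using insert.prems(2) that insert.hyps(2) by (metis insertCI)
    then show ?thesis by blast
  qed
  have i1: "(A \<union> \<Union>K) \<inter> C = {v}" using v dj by blast
  have fK: "finite (\<Union>K)" using p1 insert.hyps(1) by blast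
  have i2: "finite (A \<union> \<Union>K)" using fK assms(2) by blast
  have m: "Gf (N + (\<Sum>C\<in>K. n C)) (A \<union> \<Union>K) * Gf (n C) C
        = Gf (N + (\<Sum>C\<in>K. n C) + n C) (A \<union> \<Union>K \<union> C)"
    by (rule G_merge[OF i2 fC i1])
  have pr: "(\<Prod>C\<in>insert C K. Gf (n C) C) = Gf (n C) C * (\<Prod>C\<in>K. Gf (n C) C)"
    using insert.hyps by (rule prod.insert)
  have su: "(\<Sum>C\<in>insert C K. n C) = n C + (\<Sum>C\<in>K. n C)"
    using insert.hyps by (rule sum.insert)
  have un: "A \<union> \<Union>(insert C K) = A \<union> \<Union>K \<union> C" by blast
  have "Gf N A * (\<Prod>C\<in>insert C K. Gf (n C) C) = (Gf N A * (\<Prod>C\<in>K. Gf (n C) C)) * Gf (n C) C"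
    unfolding pr by (simp only: mult_ac)
  also have "\<dots> = Gf (N + (\<Sum>C\<in>K. n C) + n C) (A \<union> \<Union>K \<union> C)" unfolding IH m ..
  also have "\<dots> = Gf (N + (\<Sum>C\<in>insert C K. n C)) (A \<union> \<Union>(insert C K))"
    unfolding su un by (simp only: add_ac)
  finally show ?case .
qed

lemma comps_empty: "components V {} = (\<lambda>u. {u}) ` V"
proof -
  have "(stp {})\<^sup>*\<^sup>* u v \<longleftrightarrow> u = v" for u v :: 'a
  proof
    assume "(stp {})\<^sup>*\<^sup>* u v" then show "u = v"
      by (induction rule: rtranclp_induct) (auto simp: stp_def)
  qed simp
  then have "cp V {} u = {u}" if "u \<in> V" for u using that by (auto simp: cp_def)
  then show ?thesis unfolding components_cp by auto
qed

lemma main_ind: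
  fixes V :: "'a::linorder set" and E :: "'a set set" and Nf :: "'a set \<Rightarrow> complex"
  assumes hg: "hypergraph V E" and fin: "finite F"
  shows "F \<subseteq> E \<Longrightarrow>
    (hyperforest F \<longrightarrow>
      (\<Prod>A\<in>F. Gf (Nf A) A) = (\<Prod>C\<in>components V F. Gf (\<Sum>B\<in>{B\<in>F. B \<subseteq> C}. Nf B) C) \<and>
      (\<forall>C\<in>components V F. (\<Sum>B\<in>{B\<in>F. B \<subseteq> C}. card B - 1) + 1 = card C))
    \<and> (\<not> hyperforest F \<longrightarrow> (\<Prod>A\<in>F. Gf (Nf A) A) = 0)"
  using fin
proof (induction F rule: finite_induct)
  case empty
  have fV: "finite V" using hg by (simp add: hypergraph_def)
  have "(\<Prod>C\<in>components V {}. Gf (\<Sum>B\<in>{B\<in>{}. B \<subseteq> C}. Nf B) C) = 1"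
    unfolding comps_empty by (intro prod.neutral) (auto simp: Gf_single0)
  then show ?case using hyperforest_empty unfolding comps_empty by auto
next
  case (insert A F)
  note AF = insert.hyps(2)
  have FE: "F \<subseteq> E" and AE: "A \<in> E" using insert.prems by auto
  have fV: "finite V" and EV: "\<And>B. B \<in> E \<Longrightarrow> B \<subseteq> V \<and> card B \<ge> 2"
    using hg by (auto simp: hypergraph_def)
  have AV: "A \<subseteq> V" and cA: "card A \<ge> 2" using EV[OF AE] by auto
  have fA: "finite A" using AV fV finite_subset by blast
  have Ane: "A \<noteq> {}" using cA by auto
  have FV: "\<And>B. B \<in> F \<Longrightarrow> B \<subseteq> V \<and> card B \<ge> 2" using EV FE by blast
  have IH: "(hyperforest F \<longrightarrow>
      (\<Prod>A\<in>F. Gf (Nf A) A) = (\<Prod>C\<in>components V F. Gf (\<Sum>B\<in>{B\<in>F. B \<subseteq> C}. Nf B) C) \<and>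
      (\<forall>C\<in>components V F. (\<Sum>B\<in>{B\<in>F. B \<subseteq> C}. card B - 1) + 1 = card C))
    \<and> (\<not> hyperforest F \<longrightarrow> (\<Prod>A\<in>F. Gf (Nf A) A) = 0)" using insert.IH FE by blast
  have P0: "(\<Prod>B\<in>insert A F. Gf (Nf B) B) = Gf (Nf A) A * (\<Prod>B\<in>F. Gf (Nf B) B)"
    using insert.hyps by (rule prod.insert)
  have fcomps: "finite (components V F)" using fV by (rule comps_finite)
  show ?case
  proof (cases "hyperforest F")
    case False
    then have "\<not> hyperforest (insert A F)" using hyperforest_mono[of "insert A F" F] by blast
    then show ?thesis using P0 IH False by simp
  next
    case hfF: True
    have IH1: "(\<Prod>B\<in>F. Gf (Nf B) B) = (\<Prod>C\<in>components V F. Gf (\<Sum>B\<in>{B\<in>F. B \<subseteq> C}. Nf B) C)"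
      and IH2: "\<And>C. C \<in> components V F \<Longrightarrow> (\<Sum>B\<in>{B\<in>F. B \<subseteq> C}. card B - 1) + 1 = card C"
      using IH hfF by auto
    show ?thesis
    proof (cases "\<exists>C\<in>components V F. \<exists>u v. u \<noteq> v \<and> u \<in> C \<and> u \<in> A \<and> v \<in> C \<and> v \<in> A")
      case True
      then obtain C u v where C: "C \<in> components V F" "u \<noteq> v" "u \<in> C" "u \<in> A" "v \<in> C" "v \<in> A" by blast
      have "C = cp V F u" using C comp_of by metis
      then have "(stp F)\<^sup>*\<^sup>* u v" using C by (simp add: cp_def)
      then have "walk_connected F u v" by (simp add: wc_iff)
      then have nhf: "\<not> hyperforest (insert A F)" using cycle_create[OF AF C(4) C(6) C(2)] by blast
      have fC: "finite C" using comps_sub[OF C(1)] fV finite_subset by blast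
      have "(\<Prod>C\<in>components V F. Gf (\<Sum>B\<in>{B\<in>F. B \<subseteq> C}. Nf B) C)
          = Gf (\<Sum>B\<in>{B\<in>F. B \<subseteq> C}. Nf B) C * (\<Prod>C\<in>components V F - {C}. Gf (\<Sum>B\<in>{B\<in>F. B \<subseteq> C}. Nf B) C)"
        using fcomps C(1) by (rule prod.remove)
      moreover have "Gf (Nf A) A * Gf (\<Sum>B\<in>{B\<in>F. B \<subseteq> C}. Nf B) C = 0"
        using fA fC C by (intro G_zero[of A C u v]) auto
      ultimately have "(\<Prod>B\<in>insert A F. Gf (Nf B) B) = 0"
        unfolding P0 IH1 by (simp add: mult.assoc[symmetric])
      then show ?thesis using nhf by simp
    next
      case False
      have uniq: "\<And>C u v. C \<in> components V F \<Longrightarrow> u \<in> C \<Longrightarrow> u \<in> A \<Longrightarrow> v \<in> C \<Longrightarrow> v \<in> A \<Longrightarrow> u = v"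
        using False by metis
      have hf': "hyperforest (insert A F)"
      proof (rule cycle_preserve[OF hfF])
        fix u v assume uv: "u \<in> A" "v \<in> A" "walk_connected F u v"
        have uV: "u \<in> V" "v \<in> V" using uv AV by auto
        have "v \<in> cp V F u" using uv uV by (simp add: cp_def wc_iff)
        then show "u = v" using uniq[OF cp_in[OF uV(1)] cp_self[OF uV(1)] uv(1) _ uv(2)] by blast
      qed
      define K where "K = hitK V F A"
      define M where "M = \<Union>K"
      define comps where "comps = components V F"
      have Kc: "K \<subseteq> comps" by (auto simp: K_def comps_def hitK_def)
      have fK: "finite K" by (rule finite_subset[OF Kc]) (simp add: comps_def fcomps)
      have Kfin: "\<forall>C\<in>K. finite C"
      proof
        fix C assume "C \<in> K"
        then have "C \<subseteq> V" using Kc comps_sub unfolding comps_def by blast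
        then show "finite C" using fV by (rule finite_subset)
      qed
      have Ksing: "\<forall>C\<in>K. \<exists>v. C \<inter> A = {v}"
      proof
        fix C assume "C \<in> K"
        then have C: "C \<in> comps" "C \<inter> A \<noteq> {}" by (auto simp: K_def hitK_def comps_def)
        then obtain v where "v \<in> C \<inter> A" by blast
        then have "C \<inter> A = {v}" using uniq[of C _ v] C(1) unfolding comps_def by auto
        then show "\<exists>v. C \<inter> A = {v}" by blast
      qed
      have Kdisj: "\<forall>C\<in>K. \<forall>C'\<in>K. C \<noteq> C' \<longrightarrow> C \<inter> C' = {}"
      proof (intro ballI impI)
        fix C C' assume CC: "C \<in> K" "C' \<in> K" "C \<noteq> C'"
        show "C \<inter> C' = {}"
        proof (rule ccontr)
          assume "C \<inter> C' \<noteq> {}"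
          then obtain x where "x \<in> C" "x \<in> C'" by blast
          then have "C = C'" using comps_disj[of C V F C' x] CC Kc unfolding comps_def by blast
          then show False using CC by simp
        qed
      qed
      have cpK: "cp V F a \<in> K" if "a \<in> A" for a
        using that AV cp_self[of a V F] cp_in[of a V F] by (auto simp: K_def hitK_def)
      have AM: "A \<subseteq> M"
      proof
        fix a assume a: "a \<in> A"
        have "cp V F a \<in> K" using a by (rule cpK)
        moreover have "a \<in> cp V F a" using a AV by (intro cp_self) auto
        ultimately show "a \<in> M" unfolding M_def by (rule UnionI)
      qed
      have KK: "\<forall>C\<in>K. finite C \<and> (\<exists>v. C \<inter> A = {v})" using Kfin Ksing by blast
      have merge: "Gf (Nf A) A * (\<Prod>C\<in>K. Gf (\<Sum>B\<in>{B\<in>F. B \<subseteq> C}. Nf B) C)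
          = Gf (Nf A + (\<Sum>C\<in>K. \<Sum>B\<in>{B\<in>F. B \<subseteq> C}. Nf B)) M"
      proof -
        have "Gf (Nf A) A * (\<Prod>C\<in>K. Gf (\<Sum>B\<in>{B\<in>F. B \<subseteq> C}. Nf B) C)
          = Gf (Nf A + (\<Sum>C\<in>K. \<Sum>B\<in>{B\<in>F. B \<subseteq> C}. Nf B)) (A \<union> \<Union>K)"
          by (rule G_merge_set[OF fK fA KK Kdisj])
        moreover have "A \<union> \<Union>K = M" using AM unfolding M_def by blast
        ultimately show ?thesis by simp
      qed
      have split: "(\<Prod>C\<in>comps. Gf (\<Sum>B\<in>{B\<in>F. B \<subseteq> C}. Nf B) C)
          = (\<Prod>C\<in>comps - K. Gf (\<Sum>B\<in>{B\<in>F. B \<subseteq> C}. Nf B) C) * (\<Prod>C\<in>K. Gf (\<Sum>B\<in>{B\<in>F. B \<subseteq> C}. Nf B) C)"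
        using Kc fcomps unfolding comps_def by (intro prod.subset_diff) auto
      have comps': "components V (insert A F) = insert M (comps - K)"
        unfolding M_def K_def comps_def by (rule comps_insert[OF AV Ane])
      have Mnot: "M \<notin> comps - K"
      proof
        assume "M \<in> comps - K"
        moreover have "M \<inter> A \<noteq> {}" using AM Ane by blast
        ultimately show False by (auto simp: K_def hitK_def comps_def)
      qed
      have fcomps': "finite (comps - K)" using fcomps comps_def by simp
      have same: "{B\<in>insert A F. B \<subseteq> C} = {B\<in>F. B \<subseteq> C}" if "C \<in> comps - K" for C
      proof -
        have "C \<inter> A = {}" using that by (auto simp: K_def hitK_def comps_def)
        then have "\<not> A \<subseteq> C" using Ane by blast
        then show ?thesis by auto
      qed
      have edgesM: "{B\<in>insert A F. B \<subseteq> M} = insert A (\<Union>C\<in>K. {B\<in>F. B \<subseteq> C})"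
      proof (intro equalityI subsetI)
        fix B assume B: "B \<in> {B\<in>insert A F. B \<subseteq> M}"
        show "B \<in> insert A (\<Union>C\<in>K. {B\<in>F. B \<subseteq> C})"
        proof (cases "B = A")
          case False
          then have BF: "B \<in> F" "B \<subseteq> M" using B by auto
          have "B \<noteq> {}" using FV[OF BF(1)] by auto
          then obtain b where b: "b \<in> B" by blast
          have bV: "b \<in> V" using b FV[OF BF(1)] by auto
          have "B \<subseteq> V" using FV[OF BF(1)] by blast
          then have Bsub: "B \<subseteq> cp V F b" using edge_in_comp[OF BF(1) _ b] by blast
          obtain C' where C': "C' \<in> K" "b \<in> C'" using b BF(2) unfolding M_def by blast
          have "C' \<in> components V F" using C' Kc unfolding comps_def by blast
          then have "C' = cp V F b" using C'(2) by (rule comp_of)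
          then show ?thesis using Bsub C' BF by blast
        qed simp
      next
        fix B assume "B \<in> insert A (\<Union>C\<in>K. {B\<in>F. B \<subseteq> C})"
        then show "B \<in> {B\<in>insert A F. B \<subseteq> M}" using AM unfolding M_def by blast
      qed
      have Anot: "A \<notin> (\<Union>C\<in>K. {B\<in>F. B \<subseteq> C})" using AF by blast
      have fUn: "finite (\<Union>C\<in>K. {B\<in>F. B \<subseteq> C})" using fK insert.hyps(1) by auto
      have famdisj: "\<forall>C\<in>K. \<forall>C'\<in>K. C \<noteq> C' \<longrightarrow> {B\<in>F. B \<subseteq> C} \<inter> {B\<in>F. B \<subseteq> C'} = {}"
      proof (intro ballI impI)
        fix C C' assume CC: "C \<in> K" "C' \<in> K" "C \<noteq> C'"
        show "{B\<in>F. B \<subseteq> C} \<inter> {B\<in>F. B \<subseteq> C'} = {}"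
        proof (rule ccontr)
          assume "{B\<in>F. B \<subseteq> C} \<inter> {B\<in>F. B \<subseteq> C'} \<noteq> {}"
          then obtain B where B: "B \<in> F" "B \<subseteq> C" "B \<subseteq> C'" by blast
          have "B \<noteq> {}" using FV[OF B(1)] by auto
          moreover have "C \<inter> C' = {}" using Kdisj CC by blast
          ultimately show False using B by blast
        qed
      qed
      have sumM: "(\<Sum>B\<in>{B\<in>insert A F. B \<subseteq> M}. g B) = g A + (\<Sum>C\<in>K. \<Sum>B\<in>{B\<in>F. B \<subseteq> C}. g B)"
        for g :: "'a set \<Rightarrow> 'b::comm_monoid_add"
      proof -
        have "(\<Sum>B\<in>{B\<in>insert A F. B \<subseteq> M}. g B) = g A + (\<Sum>B\<in>(\<Union>C\<in>K. {B\<in>F. B \<subseteq> C}). g B)"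
          unfolding edgesM using fUn Anot by (rule sum.insert)
        also have "(\<Sum>B\<in>(\<Union>C\<in>K. {B\<in>F. B \<subseteq> C}). g B) = (\<Sum>C\<in>K. \<Sum>B\<in>{B\<in>F. B \<subseteq> C}. g B)"
          using fK insert.hyps(1) famdisj by (intro sum.UNION_disjoint) auto
        finally show ?thesis .
      qed
      have prodeq: "(\<Prod>B\<in>insert A F. Gf (Nf B) B)
          = (\<Prod>C\<in>components V (insert A F). Gf (\<Sum>B\<in>{B\<in>insert A F. B \<subseteq> C}. Nf B) C)"
      proof -
        have "(\<Prod>B\<in>insert A F. Gf (Nf B) B)
            = Gf (Nf A + (\<Sum>C\<in>K. \<Sum>B\<in>{B\<in>F. B \<subseteq> C}. Nf B)) M *
              (\<Prod>C\<in>comps - K. Gf (\<Sum>B\<in>{B\<in>F. B \<subseteq> C}. Nf B) C)"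
          unfolding P0 IH1 comps_def[symmetric] split merge[symmetric] by (simp add: mult_ac)
        also have "(\<Prod>C\<in>comps - K. Gf (\<Sum>B\<in>{B\<in>F. B \<subseteq> C}. Nf B) C)
            = (\<Prod>C\<in>comps - K. Gf (\<Sum>B\<in>{B\<in>insert A F. B \<subseteq> C}. Nf B) C)"
          using same by (intro prod.cong) auto
        also have "Nf A + (\<Sum>C\<in>K. \<Sum>B\<in>{B\<in>F. B \<subseteq> C}. Nf B) = (\<Sum>B\<in>{B\<in>insert A F. B \<subseteq> M}. Nf B)"
          by (rule sumM[symmetric])
        also have "Gf (\<Sum>B\<in>{B\<in>insert A F. B \<subseteq> M}. Nf B) M *
              (\<Prod>C\<in>comps - K. Gf (\<Sum>B\<in>{B\<in>insert A F. B \<subseteq> C}. Nf B) C)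
            = (\<Prod>C\<in>insert M (comps - K). Gf (\<Sum>B\<in>{B\<in>insert A F. B \<subseteq> C}. Nf B) C)"
          using fcomps' Mnot by (rule prod.insert[symmetric])
        finally show ?thesis unfolding comps' .
      qed
      have cardeq: "(\<Sum>B\<in>{B\<in>insert A F. B \<subseteq> C}. card B - 1) + 1 = card C"
        if C: "C \<in> components V (insert A F)" for C
      proof (cases "C = M")
        case False
        then have C': "C \<in> comps - K" using C comps' by auto
        then show ?thesis using same[OF C'] IH2[of C] unfolding comps_def by auto
      next
        case True
        have inner: "(\<Sum>B\<in>{B\<in>F. B \<subseteq> C'}. card B - 1) = card C' - 1" if "C' \<in> K" for C'
        proof -
          have "C' \<in> components V F" using that Kc unfolding comps_def by blast
          then have "(\<Sum>B\<in>{B\<in>F. B \<subseteq> C'}. card B - 1) + 1 = card C'" by (rule IH2)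
          then show ?thesis by simp
        qed
        have cM: "card M = (\<Sum>C'\<in>K. card C')"
          unfolding M_def using card_UN_disjoint[OF fK, of id] Kfin Kdisj by simp
        have bij: "bij_betw (cp V F) A K"
        proof (rule bij_betwI')
          fix x y assume xy: "x \<in> A" "y \<in> A"
          show "(cp V F x = cp V F y) = (x = y)"
          proof
            assume eq: "cp V F x = cp V F y"
            have xV: "x \<in> V" "y \<in> V" using xy AV by auto
            have "x \<in> cp V F x" using xV(1) by (rule cp_self)
            moreover have "y \<in> cp V F x" unfolding eq using xV(2) by (rule cp_self)
            ultimately show "x = y" using uniq[OF cp_in[OF xV(1)] _ xy(1) _ xy(2)] by blast
          qed simp
        next
          fix x assume "x \<in> A" then show "cp V F x \<in> K" by (rule cpK)
        next
          fix C' assume C': "C' \<in> K"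
          then obtain v where v: "C' \<inter> A = {v}" using Ksing by blast
          have "C' \<in> components V F" using C' Kc unfolding comps_def by blast
          moreover have "v \<in> C'" using v by blast
          ultimately have "C' = cp V F v" by (rule comp_of)
          then show "\<exists>x\<in>A. C' = cp V F x" using v by blast
        qed
        have cAK: "card A = card K" using bij by (rule bij_betw_same_card)
        have pos: "\<forall>C'\<in>K. card C' \<ge> 1"
        proof
          fix C' assume C': "C' \<in> K"
          then obtain v where "C' \<inter> A = {v}" using Ksing by blast
          then have "C' \<noteq> {}" by blast
          moreover have "finite C'" using C' Kfin by blast
          ultimately show "card C' \<ge> 1" by (simp add: Suc_le_eq card_gt_0_iff)
        qed
        have "(\<Sum>C'\<in>K. card C') = (\<Sum>C'\<in>K. (card C' - 1) + 1)" using pos by (intro sum.cong) auto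
        also have "\<dots> = (\<Sum>C'\<in>K. card C' - 1) + (\<Sum>C'\<in>K. 1)" by (rule sum.distrib)
        also have "(\<Sum>C'\<in>K. (1::nat)) = card K" by simp
        finally have s: "(\<Sum>C'\<in>K. card C') = (\<Sum>C'\<in>K. card C' - 1) + card K" .
        have "(\<Sum>B\<in>{B\<in>insert A F. B \<subseteq> C}. card B - 1) + 1
            = (card A - 1) + (\<Sum>C'\<in>K. \<Sum>B\<in>{B\<in>F. B \<subseteq> C'}. card B - 1) + 1"
          unfolding True sumM by simp
        also have "\<dots> = (card A - 1) + (\<Sum>C'\<in>K. card C' - 1) + 1" using inner by simp
        also have "\<dots> = card M" using cM s cAK cA by simp
        finally show ?thesis using True by simp
      qed
      show ?thesis using hf' prodeq cardeq by blast
    qed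
  qed
qed


lemma gmult_const_left: "fz x \<Longrightarrow> gmult (gconst c) x = gscale c x"
proof
  fix S assume "fz x"
  show "gmult (gconst c) x S = gscale c x S"
  proof (cases "finite S")
    case True
    have "gmult (gconst c) x S = (\<Sum>T\<in>Pow S. gsign T (S - T) * (if T = {} then c else 0) * x (S - T))"
      using True unfolding gmult_def gconst_def by simp
    also have "\<dots> = (\<Sum>T\<in>Pow S. if T = {} then c * x S else 0)" by (rule sum.cong) auto
    also have "\<dots> = c * x S" using True by simp
    finally show ?thesis by (simp add: gscale_def)
  qed (use \<open>fz x\<close> in \<open>auto simp: fz_def gmult_def gscale_def\<close>)
qed

lemma Rep_fz: "fz (Rep_ev x)" using Rep_ev[of x] by (simp add: evp_def)

lemma Rep_cst_mult: "Rep_ev (cst c * x) = gscale c (Rep_ev x)"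
  by (simp add: times_ev.rep_eq cst.rep_eq gmult_const_left Rep_fz)

lemma Rep_sum: "Rep_ev (sum f I) = gsum (\<lambda>i. Rep_ev (f i)) I"
proof (cases "finite I")
  case True
  then show ?thesis
    by (induction I rule: finite_induct) (auto simp: gsum_def zero_ev.rep_eq plus_ev.rep_eq gadd_def)
next
  case False then show ?thesis by (simp add: gsum_def zero_ev.rep_eq)
qed

lemma Rep_prod_list: "Rep_ev (prod_list (map f xs)) = foldr gmult (map (\<lambda>x. Rep_ev (f x)) xs) (gconst 1)"
  by (induction xs) (auto simp: one_ev.rep_eq times_ev.rep_eq)

lemma Rep_T: "Rep_ev (T A) = tau A"
proof (cases "finite A")
  case True
  have "T A = prod_list (map (\<lambda>k. e k k) (sorted_list_of_set A))"
    unfolding T_def using True by (metis prod.distinct_set_conv_list sorted_list_of_set(1,3))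
  then show ?thesis unfolding tau_def gprod_def by (simp add: Rep_prod_list e.rep_eq comp_def)
next
  case False
  then show ?thesis by (simp add: T_def tau_def gprod_def one_ev.rep_eq)
qed

lemma Rep_Gf: "fA lam A = Rep_ev (Gf (lam * (of_nat (card A) - 1)) A)"
proof -
  have "Rep_ev (Gf (lam * (of_nat (card A) - 1)) A) =
     gsub (gsub (gsum (\<lambda>i. tau (A - {i})) A)
               (gsum (\<lambda>x. gmult (gmult (psibar (fst x)) (psi (snd x))) (tau (A - {fst x, snd x}))) (PP A)))
          (gscale (lam * (of_nat (card A) - 1)) (tau A))"
    unfolding Gf_def F0_def minus_ev.rep_eq Rep_cst_mult
    by (simp add: minus_ev.rep_eq Rep_sum Rep_T times_ev.rep_eq e.rep_eq case_prod_unfold)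
  then show ?thesis unfolding fA_def PP_def
    by (simp add: fun_eq_iff gsub_def gadd_def gscale_def gsum_def case_prod_unfold algebra_simps)
qed

lemma gprod_Rep: "(\<And>x. x \<in> set xs \<Longrightarrow> f x = Rep_ev (h x)) \<Longrightarrow> gprod (map f xs) = Rep_ev (prod_list (map h xs))"
  unfolding gprod_def Rep_prod_list by (induction xs) auto

lemma finite_E: "hypergraph V E \<Longrightarrow> finite E"
  unfolding hypergraph_def by (meson Pow_iff finite_Pow_iff finite_subset subsetI)

lemma nf_C:
  fixes lam :: complex and lf :: "'a set \<Rightarrow> complex" and E :: "'a set set"
  assumes hg: "hypergraph V E"
    and inv: "(\<Sum>B\<in>{B\<in>E. B \<subseteq> C}. card B - 1) + 1 = card C"
  shows "(\<Sum>B\<in>{B\<in>E. B \<subseteq> C}. lf B * (of_nat (card B) - 1)) = comp_lambda E lf C * (of_nat (card C) - 1)"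
    and "(\<Sum>B\<in>{B\<in>E. B \<subseteq> C}. lam * (of_nat (card B) - 1)) = lam * (of_nat (card C) - 1)"
proof -
  define Ed where "Ed = {B\<in>E. B \<subseteq> C}"
  have fEd: "finite Ed" unfolding Ed_def using finite_E[OF hg] by simp
  have cB: "card B \<ge> 2" if "B \<in> Ed" for B using that hg by (auto simp: Ed_def hypergraph_def)
  have ofn: "(of_nat (card B - 1) :: complex) = of_nat (card B) - 1" if "B \<in> Ed" for B
    using cB[OF that] by (simp add: of_nat_diff)
  have natsum: "(\<Sum>B\<in>Ed. card B - 1) = card C - 1" using inv unfolding Ed_def by simp
  have cC: "card C \<ge> 1" using inv by simp
  have D: "(\<Sum>B\<in>Ed. (of_nat (card B - 1) :: complex)) = of_nat (card C) - 1"
  proof -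
    have "(\<Sum>B\<in>Ed. (of_nat (card B - 1) :: complex)) = of_nat (\<Sum>B\<in>Ed. card B - 1)" by simp
    also have "\<dots> = of_nat (card C - 1)" unfolding natsum ..
    also have "\<dots> = of_nat (card C) - 1" using cC by (simp add: of_nat_diff)
    finally show ?thesis .
  qed
  have num: "(\<Sum>B\<in>Ed. lf B * (of_nat (card B) - 1)) = (\<Sum>B\<in>Ed. of_nat (card B - 1) * lf B)"
    using ofn by (intro sum.cong) auto
  have cl: "comp_lambda E lf C = (\<Sum>B\<in>Ed. of_nat (card B - 1) * lf B) / (\<Sum>B\<in>Ed. of_nat (card B - 1))"
    unfolding comp_lambda_def Ed_def ..
  show "(\<Sum>B\<in>{B\<in>E. B \<subseteq> C}. lf B * (of_nat (card B) - 1)) = comp_lambda E lf C * (of_nat (card C) - 1)"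
  proof (cases "(\<Sum>B\<in>Ed. (of_nat (card B - 1) :: complex)) = 0")
    case False
    then show ?thesis unfolding Ed_def[symmetric] cl num D[symmetric] by simp
  next
    case True
    then have "(\<Sum>B\<in>Ed. card B - 1) = 0" by (metis of_nat_eq_0_iff of_nat_sum)
    then have "\<forall>B\<in>Ed. card B - 1 = 0" using fEd by simp
    then have "Ed = {}" using cB by fastforce
    then show ?thesis using True D unfolding Ed_def[symmetric] by simp
  qed
  show "(\<Sum>B\<in>{B\<in>E. B \<subseteq> C}. lam * (of_nat (card B) - 1)) = lam * (of_nat (card C) - 1)"
  proof -
    have "(\<Sum>B\<in>Ed. lam * (of_nat (card B) - 1)) = lam * (\<Sum>B\<in>Ed. (of_nat (card B - 1) :: complex))"
      unfolding sum_distrib_left using ofn by (intro sum.cong) auto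
    then show ?thesis unfolding Ed_def[symmetric] D by simp
  qed
qed

theorem corollary4p4:
  fixes V :: "'a::linorder set" and E :: "'a set set"
    and lam :: complex and lamA :: "'a set \<Rightarrow> complex"
  assumes "hypergraph V E"
  shows "(hyperforest E \<longrightarrow>
           (\<forall>es cs. distinct es \<and> set es = E \<and> distinct cs \<and> set cs = components V E \<longrightarrow>
              gprod (map (fA lam) es) = gprod (map (fA lam) cs) \<and>
              gprod (map (\<lambda>A. fA (lamA A) A) es) =
                gprod (map (\<lambda>C. fA (comp_lambda E lamA C) C) cs)))
       \<and> (\<not> hyperforest E \<longrightarrow>
           (\<forall>es. distinct es \<and> set es = E \<longrightarrow>
              gprod (map (fA lam) es) = gconst 0 \<and>
              gprod (map (\<lambda>A. fA (lamA A) A) es) = gconst 0))"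
proof -
  note hg = assms
  have finE: "finite E" using hg by (rule finite_E)
  define N1 where "N1 = (\<lambda>A::'a set. lam * (of_nat (card A) - 1))"
  define N2 where "N2 = (\<lambda>A::'a set. lamA A * (of_nat (card A) - 1))"
  note M1 = main_ind[OF hg finE, where Nf = N1, OF subset_refl]
  note M2 = main_ind[OF hg finE, where Nf = N2, OF subset_refl]
  have L1: "gprod (map (fA lam) es) = Rep_ev (\<Prod>A\<in>E. Gf (N1 A) A)" if "distinct es" "set es = E" for es
  proof -
    have "gprod (map (fA lam) es) = Rep_ev (prod_list (map (\<lambda>A. Gf (N1 A) A) es))"
      by (rule gprod_Rep) (simp add: Rep_Gf N1_def)
    also have "prod_list (map (\<lambda>A. Gf (N1 A) A) es) = (\<Prod>A\<in>E. Gf (N1 A) A)"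
      using prod.distinct_set_conv_list[OF that(1), of "\<lambda>A. Gf (N1 A) A"] that(2) by simp
    finally show ?thesis .
  qed
  have L2: "gprod (map (\<lambda>A. fA (lamA A) A) es) = Rep_ev (\<Prod>A\<in>E. Gf (N2 A) A)" if "distinct es" "set es = E" for es
  proof -
    have "gprod (map (\<lambda>A. fA (lamA A) A) es) = Rep_ev (prod_list (map (\<lambda>A. Gf (N2 A) A) es))"
      by (rule gprod_Rep) (simp add: Rep_Gf N2_def)
    also have "prod_list (map (\<lambda>A. Gf (N2 A) A) es) = (\<Prod>A\<in>E. Gf (N2 A) A)"
      using prod.distinct_set_conv_list[OF that(1), of "\<lambda>A. Gf (N2 A) A"] that(2) by simp
    finally show ?thesis .
  qed
  have part1: "hyperforest E \<longrightarrow>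
           (\<forall>es cs. distinct es \<and> set es = E \<and> distinct cs \<and> set cs = components V E \<longrightarrow>
              gprod (map (fA lam) es) = gprod (map (fA lam) cs) \<and>
              gprod (map (\<lambda>A. fA (lamA A) A) es) =
                gprod (map (\<lambda>C. fA (comp_lambda E lamA C) C) cs))"
  proof (intro impI allI)
    fix es cs assume hf: "hyperforest E"
      and a: "distinct es \<and> set es = E \<and> distinct cs \<and> set cs = components V E"
    have P1: "(\<Prod>A\<in>E. Gf (N1 A) A) = (\<Prod>C\<in>components V E. Gf (\<Sum>B\<in>{B\<in>E. B \<subseteq> C}. N1 B) C)"
      and P2: "(\<Prod>A\<in>E. Gf (N2 A) A) = (\<Prod>C\<in>components V E. Gf (\<Sum>B\<in>{B\<in>E. B \<subseteq> C}. N2 B) C)"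
      and inv: "\<And>C. C \<in> components V E \<Longrightarrow> (\<Sum>B\<in>{B\<in>E. B \<subseteq> C}. card B - 1) + 1 = card C"
      using M1 M2 hf by auto
    have R1: "gprod (map (fA lam) cs) = Rep_ev (\<Prod>C\<in>components V E. Gf (\<Sum>B\<in>{B\<in>E. B \<subseteq> C}. N1 B) C)"
    proof -
      have "gprod (map (fA lam) cs) = Rep_ev (prod_list (map (\<lambda>C. Gf (\<Sum>B\<in>{B\<in>E. B \<subseteq> C}. N1 B) C) cs))"
      proof (rule gprod_Rep)
        fix C assume "C \<in> set cs"
        then have C: "C \<in> components V E" using a by simp
        show "fA lam C = Rep_ev (Gf (\<Sum>B\<in>{B\<in>E. B \<subseteq> C}. N1 B) C)"
          unfolding Rep_Gf N1_def nf_C(2)[OF hg inv[OF C]] ..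
      qed
      also have "prod_list (map (\<lambda>C. Gf (\<Sum>B\<in>{B\<in>E. B \<subseteq> C}. N1 B) C) cs)
          = (\<Prod>C\<in>components V E. Gf (\<Sum>B\<in>{B\<in>E. B \<subseteq> C}. N1 B) C)"
        using prod.distinct_set_conv_list[of cs "\<lambda>C. Gf (\<Sum>B\<in>{B\<in>E. B \<subseteq> C}. N1 B) C"] a by simp
      finally show ?thesis .
    qed
    have R2: "gprod (map (\<lambda>C. fA (comp_lambda E lamA C) C) cs) = Rep_ev (\<Prod>C\<in>components V E. Gf (\<Sum>B\<in>{B\<in>E. B \<subseteq> C}. N2 B) C)"
    proof -
      have "gprod (map (\<lambda>C. fA (comp_lambda E lamA C) C) cs) = Rep_ev (prod_list (map (\<lambda>C. Gf (\<Sum>B\<in>{B\<in>E. B \<subseteq> C}. N2 B) C) cs))"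
      proof (rule gprod_Rep)
        fix C assume "C \<in> set cs"
        then have C: "C \<in> components V E" using a by simp
        show "fA (comp_lambda E lamA C) C = Rep_ev (Gf (\<Sum>B\<in>{B\<in>E. B \<subseteq> C}. N2 B) C)"
          unfolding Rep_Gf N2_def nf_C(1)[OF hg inv[OF C]] ..
      qed
      also have "prod_list (map (\<lambda>C. Gf (\<Sum>B\<in>{B\<in>E. B \<subseteq> C}. N2 B) C) cs)
          = (\<Prod>C\<in>components V E. Gf (\<Sum>B\<in>{B\<in>E. B \<subseteq> C}. N2 B) C)"
        using prod.distinct_set_conv_list[of cs "\<lambda>C. Gf (\<Sum>B\<in>{B\<in>E. B \<subseteq> C}. N2 B) C"] a by simp
      finally show ?thesis .
    qed
    show "gprod (map (fA lam) es) = gprod (map (fA lam) cs) \<and>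
              gprod (map (\<lambda>A. fA (lamA A) A) es) =
                gprod (map (\<lambda>C. fA (comp_lambda E lamA C) C) cs)"
      using L1[of es] L2[of es] a R1 R2 P1 P2 by simp
  qed
  have part2: "\<not> hyperforest E \<longrightarrow>
           (\<forall>es. distinct es \<and> set es = E \<longrightarrow>
              gprod (map (fA lam) es) = gconst 0 \<and>
              gprod (map (\<lambda>A. fA (lamA A) A) es) = gconst 0)"
  proof (intro impI allI)
    fix es assume hf: "\<not> hyperforest E" and a: "distinct es \<and> set es = E"
    have "(\<Prod>A\<in>E. Gf (N1 A) A) = 0" "(\<Prod>A\<in>E. Gf (N2 A) A) = 0" using M1 M2 hf by auto
    moreover have "Rep_ev 0 = gconst 0" by (simp add: zero_ev.rep_eq gconst_def fun_eq_iff)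
    ultimately show "gprod (map (fA lam) es) = gconst 0 \<and> gprod (map (\<lambda>A. fA (lamA A) A) es) = gconst 0"
      using L1[of es] L2[of es] a by simp
  qed
  show ?thesis using part1 part2 by blast
qed


end
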